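(* Let $G$ be a meromorphic function on $\mathbb{C}$, holomorphic on $\{\operatorname{Im}\omega\ge 0\}$, whose poles $\{\omega_n^+\}$ (all with $\operatorname{Im}\omega_n^+<0$) and zeros $\{\omega_n^-\}$ are all simple, with $G(0)\notin\{0,\infty\}$. Assume: (a) there exist a strictly increasing sequence $R_N\to\infty$, with no poles or zeros of $G$ on the circles $|\omega|=R_N$, and $C>0$ with $\max_{|\omega|=R_N}|G'(\omega)/G(\omega)|\le C/R_N$ for all $N$; (b) (thermal product formula) $\sum_n|\omega_n^+|^{-2}<\infty$ and there exist $\beta>0$ and $\mu\in\mathbb{C}\setminus\{0\}$ such that $$\rho(\omega)=\frac{\mu\sinh\frac{\beta\omega}{2}}{\prod_n\left[1-\left(\frac{\omega}{\omega_n^+}\right)^2\right]}$$ for all $\omega$ that are not poles of $\rho$. Then the limit $S(\omega)=\lim_{N\to\infty}\pi_N^+(\omega)\,\pi_N^-(-\omega)$ exists for every $\omega\in\mathbb{C}$, and $$S(\omega)-S(-\omega)=2i\lambda\sinh\frac{\beta\omega}{2}\quad\text{for all }\omega\in\mathbb{C},\qquad \lambda=-\frac{\mu}{G(0)}=\frac{2iG'(0)}{\beta G(0)}.$$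
   Context: $\rho(\omega)=\frac{G(\omega)-G(-\omega)}{2i}$. For the sequence $R_N$ in (a), $\pi_N^{\pm}(\omega)=\prod_{|\omega_n^{\pm}|<R_N}\left(1-\frac{\omega}{\omega_n^{\pm}}\right)$ (finite products over poles, resp. zeros, of $G$ of modulus less than $R_N$). *)

theory Defs
  imports "HOL-Complex_Analysis.Complex_Analysis"
begin

definition poles_of :: "(complex \<Rightarrow> complex) \<Rightarrow> complex set" where
  "poles_of G = {z. is_pole G z}"

text \<open>Zeros of a nicely meromorphic function G (values at poles are 0 by
  convention, so poles are excluded explicitly).\<close>
definition zeros_of :: "(complex \<Rightarrow> complex) \<Rightarrow> complex set" where
  "zeros_of G = {z. G z = 0 \<and> \<not> is_pole G z}"

definition rho_of :: "(complex \<Rightarrow> complex) \<Rightarrow> complex \<Rightarrow> complex" where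
  "rho_of G w = (G w - G (- w)) / (2 * \<i>)"

text \<open>Finite product over the points of A of modulus less than r:
  prod_{a in A, |a| < r} (1 - w/a).  With A = poles (resp. zeros) and r = R_N
  this is pi_N^+ (resp. pi_N^-).\<close>
definition trunc_prod :: "complex set \<Rightarrow> real \<Rightarrow> complex \<Rightarrow> complex" where
  "trunc_prod A r w = (\<Prod>a\<in>{a\<in>A. norm a < r}. (1 - w / a))"

definition sq_infprod :: "complex set \<Rightarrow> complex \<Rightarrow> complex" where
  "sq_infprod A w = Lim at_top (\<lambda>r::real. \<Prod>a\<in>{a\<in>A. norm a < r}. (1 - (w / a)^2))"

end

theory Submission
  imports Defs
begin

lemma prod_minus1_bound:
  fixes z :: "'b \<Rightarrow> complex"
  shows "norm ((\<Prod>a\<in>A. 1 + z a) - 1) \<le> (\<Prod>a\<in>A. 1 + norm (z a)) - 1"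
proof (induction A rule: infinite_finite_induct)
  case (insert x A)
  let ?P = "\<Prod>a\<in>A. 1 + z a" and ?Q = "\<Prod>a\<in>A. 1 + norm (z a)"
  have "(\<Prod>a\<in>insert x A. 1 + z a) - 1 = (1 + z x) * (?P - 1) + z x"
    using insert by (simp add: algebra_simps)
  also have "norm \<dots> \<le> (1 + norm (z x)) * (?Q - 1) + norm (z x)"
  proof -
    have "norm ((1 + z x) * (?P - 1)) \<le> (1 + norm (z x)) * (?Q - 1)"
      unfolding norm_mult
      by (intro mult_mono insert.IH) (auto intro: order_trans[OF norm_triangle_ineq] order_trans[OF _ insert.IH])
    then show ?thesis by (meson add_mono norm_triangle_ineq order_trans order_refl)
  qed
  also have "\<dots> = (\<Prod>a\<in>insert x A. 1 + norm (z a)) - 1"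
    using insert by (simp add: algebra_simps)
  finally show ?case .
qed auto

lemma prod_minus1_exp_bound:
  fixes z :: "'b \<Rightarrow> complex"
  shows "norm ((\<Prod>a\<in>A. 1 + z a) - 1) \<le> exp (\<Sum>a\<in>A. norm (z a)) - 1"
  using prod_minus1_bound[of z A] prod_le_exp_sum[of A "\<lambda>a. norm (z a)"] by simp

lemma prod_norm_exp_bound:
  fixes z :: "'b \<Rightarrow> complex"
  shows "norm (\<Prod>a\<in>A. 1 + z a) \<le> exp (\<Sum>a\<in>A. norm (z a))"
proof -
  have "norm (\<Prod>a\<in>A. 1 + z a) = (\<Prod>a\<in>A. norm (1 + z a))" by (simp add: prod_norm)
  also have "\<dots> \<le> (\<Prod>a\<in>A. 1 + norm (z a))"
    by (intro prod_mono) (auto intro: norm_triangle_le)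
  also have "\<dots> \<le> exp (\<Sum>a\<in>A. norm (z a))" by (rule prod_le_exp_sum) auto
  finally show ?thesis .
qed

lemma prod_diff_bound:
  fixes z :: "'b \<Rightarrow> complex"
  assumes "finite A'" "A \<subseteq> A'"
  shows "norm ((\<Prod>a\<in>A'. 1 + z a) - (\<Prod>a\<in>A. 1 + z a))
     \<le> exp (\<Sum>a\<in>A. norm (z a)) * (exp (\<Sum>a\<in>A'-A. norm (z a)) - 1)"
proof -
  have fA: "finite A" using assms finite_subset by blast
  have "(\<Prod>a\<in>A'. 1 + z a) = (\<Prod>a\<in>A. 1 + z a) * (\<Prod>a\<in>A'-A. 1 + z a)"
    using assms by (metis (no_types, lifting) prod.subset_diff mult.commute)
  hence "(\<Prod>a\<in>A'. 1 + z a) - (\<Prod>a\<in>A. 1 + z a) = (\<Prod>a\<in>A. 1 + z a) * ((\<Prod>a\<in>A'-A. 1 + z a) - 1)"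
    by (simp add: algebra_simps)
  hence "norm ((\<Prod>a\<in>A'. 1 + z a) - (\<Prod>a\<in>A. 1 + z a)) = norm (\<Prod>a\<in>A. 1 + z a) * norm ((\<Prod>a\<in>A'-A. 1 + z a) - 1)"
    by (simp add: norm_mult)
  also have "\<dots> \<le> exp (\<Sum>a\<in>A. norm (z a)) * (exp (\<Sum>a\<in>A'-A. norm (z a)) - 1)"
    by (intro mult_mono prod_norm_exp_bound prod_minus1_exp_bound) auto
  finally show ?thesis .
qed

lemma circle_integral_rat0:
  assumes "norm a < R" "norm w < R"
  shows "((\<lambda>u. 1 / ((u - a) * (u - w))) has_contour_integral 0) (circlepath 0 R)"
proof (cases "a = w")
  case True
  have "((\<lambda>u. 1 / (u - w) ^ Suc 1) has_contour_integral ((2 * pi * \<i>) / (fact 1) * (deriv ^^ 1) (\<lambda>_. 1) w))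
           (circlepath 0 R)"
    by (rule Cauchy_has_contour_integral_higher_derivative_circlepath) (use assms in auto)
  then show ?thesis using True by (simp add: power2_eq_square)
next
  case False
  have 1: "((\<lambda>u. 1 / (u - a)) has_contour_integral (2 * of_real pi * \<i>)) (circlepath 0 R)"
    using Cauchy_integral_circlepath[of 0 R "\<lambda>_. 1" a] assms by simp
  have 2: "((\<lambda>u. 1 / (u - w)) has_contour_integral (2 * of_real pi * \<i>)) (circlepath 0 R)"
    using Cauchy_integral_circlepath[of 0 R "\<lambda>_. 1" w] assms by simp
  have "((\<lambda>u. (1/(a-w)) * (1 / (u - a) - 1 / (u - w))) has_contour_integral ((1/(a-w)) * 0)) (circlepath 0 R)"
    by (intro has_contour_integral_lmul) (use has_contour_integral_diff[OF 1 2] in simp)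
  then have "((\<lambda>u. (1/(a-w)) * (1 / (u - a) - 1 / (u - w))) has_contour_integral 0) (circlepath 0 R)"
    by simp
  then show ?thesis
  proof (rule has_contour_integral_eq)
    fix u assume "u \<in> path_image (circlepath 0 R)"
    moreover have "R \<ge> 0" using assms(1) norm_ge_zero[of a] by linarith
    ultimately have "norm u = R" by (simp add: path_image_circlepath_nonneg)
    hence "u \<noteq> a" "u \<noteq> w" using assms by auto
    thus "(1/(a-w)) * (1 / (u - a) - 1 / (u - w)) = 1 / ((u - a) * (u - w))"
      using False by (simp add: divide_simps)
  qed
qed


lemma cauchy_logderiv_bound:
  assumes U: "open U" "cball 0 R \<subseteq> U" and R: "R > 0" and hol: "h holomorphic_on U"
    and A: "finite A" "A \<subseteq> ball 0 R"
    and hk: "\<And>u. norm u = R \<Longrightarrow> h u = k u + (\<Sum>a\<in>A. c a / (u - a))"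
    and kb: "\<And>u. norm u = R \<Longrightarrow> norm (k u) \<le> C / R" and C: "C \<ge> 0" and w: "norm w < R"
  shows "norm (h w) \<le> C / (R - norm w)"
proof -
  have I1: "((\<lambda>u. h u / (u - w)) has_contour_integral (2 * of_real pi * \<i> * h w)) (circlepath 0 R)"
  proof (rule Cauchy_integral_circlepath)
    show "continuous_on (cball 0 R) h"
      using hol U by (meson holomorphic_on_imp_continuous_on holomorphic_on_subset)
    show "h holomorphic_on ball 0 R"
      using hol U by (meson ball_subset_cball holomorphic_on_subset order_trans)
  qed (use w in auto)
  have I2: "((\<lambda>u. \<Sum>a\<in>A. c a * (1/((u-a)*(u-w)))) has_contour_integral (\<Sum>a\<in>A. c a * 0)) (circlepath 0 R)"
    by (intro has_contour_integral_sum has_contour_integral_lmul circle_integral_rat0 A(1))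
       (use A w in auto)
  have I3: "((\<lambda>u. h u / (u - w) - (\<Sum>a\<in>A. c a * (1/((u-a)*(u-w))))) has_contour_integral (2 * of_real pi * \<i> * h w)) (circlepath 0 R)"
    using has_contour_integral_diff[OF I1 I2] by simp
  have Bnn: "0 \<le> C / R / (R - norm w)" using C R w by simp
  have "norm (2 * of_real pi * \<i> * h w) \<le> C / R / (R - norm w) * (2 * pi * R)"
  proof (rule has_contour_integral_bound_circlepath[OF I3 Bnn R])
    fix x :: complex assume x: "norm (x - 0) = R"
    hence xR: "norm x = R" by simp
    have d: "norm (x - w) \<ge> R - norm w" using norm_triangle_ineq2[of x w] xR by simp
    have xw: "x \<noteq> w" using xR w by auto
    have "h x / (x - w) - (\<Sum>a\<in>A. c a * (1/((x-a)*(x-w)))) = k x / (x - w)"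
      using hk[OF xR] by (simp add: sum_divide_distrib add_divide_distrib)
    also have "norm \<dots> \<le> C / R / (R - norm w)"
      unfolding norm_divide
      by (intro frac_le kb xR d) (use R w C in auto)
    finally show "norm (h x / (x - w) - (\<Sum>a\<in>A. c a * (1/((x-a)*(x-w))))) \<le> C / R / (R - norm w)" .
  qed
  also have "C / R / (R - norm w) * (2 * pi * R) = 2 * pi * (C / (R - norm w))"
  proof -
    have *: "C / R / D * (2 * pi * R) = 2 * pi * (C / D)" for D
      using R by (simp add: field_simps)
    show ?thesis by (rule *)
  qed
  finally have "2 * pi * norm (h w) \<le> 2 * pi * (C / (R - norm w))"
    by (simp add: norm_mult)
  moreover have "(0::real) < 2 * pi" by simp
  ultimately show ?thesis by (rule mult_left_le_imp_le)
qed

lemma norm_exp_minus1_le: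
  fixes d :: complex
  shows "norm (exp d - 1) \<le> norm d * exp (norm d)"
proof -
  have "norm (exp d - exp 0) \<le> exp (norm d) * norm (d - 0)"
  proof (rule field_differentiable_bound[of "cball 0 (norm d)" exp exp])
    fix z :: complex assume "z \<in> cball 0 (norm d)"
    hence "norm z \<le> norm d" by simp
    have "norm (exp z) = exp (Re z)" by simp
    also have "\<dots> \<le> exp (norm z)" using complex_Re_le_cmod by simp
    also have "\<dots> \<le> exp (norm d)" using \<open>norm z \<le> norm d\<close> by (simp only: exp_le_cancel_iff)
    finally show "norm (exp z) \<le> exp (norm d)" .
  next
    fix z :: complex
    show "(exp has_field_derivative exp z) (at z within cball 0 (norm d))"
      by (rule has_field_derivative_at_within) (rule DERIV_exp)
  qed auto
  thus ?thesis by (simp add: mult.commute)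
qed
lemma logderiv_exp_bound:
  assumes hol: "F holomorphic_on ball 0 R" and nz: "\<And>z. z \<in> ball 0 R \<Longrightarrow> F z \<noteq> 0"
    and r: "0 \<le> r" "r < R"
    and bnd: "\<And>z. z \<in> cball 0 r \<Longrightarrow> norm (deriv F z / F z) \<le> B" and v: "norm v \<le> r"
  shows "norm (F v - F 0) \<le> norm (F 0) * (B * r * exp (B * r))"
proof -
  have "norm (deriv F 0 / F 0) \<le> B" using bnd[of 0] r by simp
  hence B: "B \<ge> 0" using norm_ge_zero order_trans by blast
  have hh: "(\<lambda>z. deriv F z / F z) holomorphic_on ball 0 R"
    using holomorphic_deriv[OF hol open_ball] hol nz by (intro holomorphic_on_divide) auto
  obtain g where g: "\<And>x. x \<in> ball 0 R \<Longrightarrow> (g has_field_derivative (deriv F x / F x)) (at x within ball 0 R)"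
    using holomorphic_convex_primitive'[OF convex_ball open_ball hh] by blast
  have g': "(g has_field_derivative (deriv F x / F x)) (at x)" if "x \<in> ball 0 R" for x
    using g[OF that] by (simp only: at_within_open[OF that open_ball])
  have F': "(F has_field_derivative deriv F x) (at x)" if "x \<in> ball 0 R" for x
    using hol that by (intro holomorphic_derivI[of _ "ball 0 R"]) auto
  have "\<exists>c. \<forall>x\<in>ball 0 R. F x * exp (- g x) = c"
  proof (rule has_field_derivative_zero_constant[OF convex_ball])
    fix x :: complex assume x: "x \<in> ball 0 R"
    have e: "((\<lambda>x. exp (- g x)) has_field_derivative exp (- g x) * (- (deriv F x / F x))) (at x)"
      by (rule DERIV_chain2[OF DERIV_exp DERIV_minus[OF g'[OF x]]])
    have "((\<lambda>x. F x * exp (- g x)) has_field_derivative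
           F x * (exp (- g x) * (- (deriv F x / F x))) + deriv F x * exp (- g x)) (at x)"
      by (rule DERIV_mult'[OF F'[OF x] e])
    hence "((\<lambda>x. F x * exp (- g x)) has_field_derivative
           deriv F x * exp (- g x) + F x * (exp (- g x) * (- (deriv F x / F x)))) (at x)"
      by (simp only: add.commute)
    also have "deriv F x * exp (- g x) + F x * (exp (- g x) * (- (deriv F x / F x))) = 0"
      using nz[OF x] by (simp add: field_simps)
    finally show "((\<lambda>x. F x * exp (- g x)) has_field_derivative 0) (at x within ball 0 R)"
      by (rule has_field_derivative_at_within)
  qed
  then obtain c where c: "\<And>x. x \<in> ball 0 R \<Longrightarrow> F x * exp (- g x) = c" by blast
  have vR: "v \<in> ball 0 R" and zR: "(0::complex) \<in> ball 0 R" using v r by auto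
  have Fv: "F v = F 0 * exp (g v - g 0)"
  proof -
    have "F v * exp (- g v) = F 0 * exp (- g 0)" using c[OF vR] c[OF zR] by simp
    hence "F v * exp (- g v) * exp (g v) = F 0 * exp (- g 0) * exp (g v)" by simp
    thus ?thesis by (simp add: exp_minus exp_diff field_simps)
  qed
  have "norm (g v - g 0) \<le> B * norm (v - 0)"
  proof (rule field_differentiable_bound[of "cball 0 r" g "\<lambda>z. deriv F z / F z"])
    fix z :: complex assume "z \<in> cball 0 r"
    hence zb: "z \<in> ball 0 R" using r by auto
    show "(g has_field_derivative deriv F z / F z) (at z within cball 0 r)"
      using g'[OF zb] by (rule has_field_derivative_at_within)
  qed (use bnd v r in auto)
  moreover have "B * norm (v - 0) \<le> B * r" using v B by (simp add: mult_left_mono)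
  ultimately have d: "norm (g v - g 0) \<le> B * r" by linarith
  have "norm (F v - F 0) = norm (F 0) * norm (exp (g v - g 0) - 1)"
  proof -
    have "F v - F 0 = F 0 * (exp (g v - g 0) - 1)" by (simp add: Fv algebra_simps)
    thus ?thesis by (simp only: norm_mult)
  qed
  also have "\<dots> \<le> norm (F 0) * (B * r * exp (B * r))"
  proof (rule mult_left_mono)
    have "norm (exp (g v - g 0) - 1) \<le> norm (g v - g 0) * exp (norm (g v - g 0))"
      by (rule norm_exp_minus1_le)
    also have "\<dots> \<le> (B * r) * exp (B * r)"
    proof (rule mult_mono)
      show "exp (norm (g v - g 0)) \<le> exp (B * r)" using d by (simp only: exp_le_cancel_iff)
      show "0 \<le> B * r" using B r(1) by (rule mult_nonneg_nonneg)
    qed (use d in simp_all)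
    finally show "norm (exp (g v - g 0) - 1) \<le> B * r * exp (B * r)" .
  qed simp
  finally show ?thesis .
qed

lemma remove_sings_local:
  assumes "open S" "z \<in> S" "H holomorphic_on S" "\<And>w. w \<in> S - {z} \<Longrightarrow> f w = H w" "w \<in> S"
  shows "remove_sings f w = H w"
proof (rule remove_sings_eqI)
  have cH: "isCont H w"
    using assms by (meson holomorphic_on_imp_continuous_on continuous_on_eq_continuous_at)
  have ev: "eventually (\<lambda>x. x \<in> S - {z}) (at w)"
  proof (cases "w = z")
    case True thus ?thesis using eventually_at_in_open[OF assms(1,5)] by simp
  next
    case False
    hence "open (S - {z})" "w \<in> S - {z}" using assms by auto
    thus ?thesis using eventually_at_in_open' by blast
  qed
  have "H \<midarrow>w\<rightarrow> H w" using cH by (simp add: isCont_def)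
  thus "f \<midarrow>w\<rightarrow> H w"
    by (rule tendsto_cong[THEN iffD1, rotated]) (use ev assms(4) in \<open>auto elim!: eventually_mono\<close>)
qed

lemma remove_sings_local_analytic:
  assumes "open S" "z \<in> S" "H holomorphic_on S" "\<And>w. w \<in> S - {z} \<Longrightarrow> f w = H w"
  shows "remove_sings f analytic_on {z}"
proof -
  have "remove_sings f holomorphic_on S"
    using assms(3) by (rule holomorphic_transform) (use remove_sings_local[OF assms] in auto)
  thus ?thesis using assms(1,2) analytic_at by blast
qed

locale thmG =
  fixes G :: "complex \<Rightarrow> complex"
  assumes mero: "G nicely_meromorphic_on UNIV"
    and simple_poles: "\<forall>z\<in>poles_of G. zorder G z = -1"
    and simple_zeros: "\<forall>z\<in>zeros_of G. zorder G z = 1"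
    and G0: "\<not> is_pole G 0" "G 0 \<noteq> 0"

context thmG
begin

lemma Zall_sparse: "{z. G z = 0} sparse_in UNIV"
proof -
  have "(\<forall>x\<in>UNIV. G x = 0) \<or> eventually (\<lambda>x. G x \<noteq> 0) (cosparse UNIV)"
    by (rule nicely_meromorphic_imp_constant_or_avoid[OF mero]) auto
  with G0 have "eventually (\<lambda>x. G x \<noteq> 0) (cosparse UNIV)" by auto
  thus ?thesis by (simp add: eventually_cosparse)
qed

lemma Zall_closed: "closed {z. G z = 0}"
  using Zall_sparse by (rule sparse_in_UNIV_imp_closed)

lemma Zall_diff_closed: "closed ({z. G z = 0} - X)"
proof -
  have "({z. G z = 0} - X) sparse_in UNIV" by (rule sparse_in_subset2[OF Zall_sparse]) blast
  thus ?thesis by (rule sparse_in_UNIV_imp_closed)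
qed

lemma Zall_finite_cball: "finite ({z. G z = 0} \<inter> cball c r)"
proof -
  have "finite (cball c r \<inter> {z. G z = 0})"
    by (rule sparse_in_compact_finite) (use sparse_in_subset[OF Zall_sparse] in auto)
  thus ?thesis by (simp add: Int_commute)
qed

lemma poles_sub: "poles_of G \<subseteq> {z. G z = 0}"
  using is_pole_zero_at_nicely_mero[OF mero] by (auto simp: poles_of_def)

lemma Zall_eq: "{z. G z = 0} = poles_of G \<union> zeros_of G"
  using poles_sub by (auto simp: zeros_of_def poles_of_def)

lemma poles_zeros_disj: "poles_of G \<inter> zeros_of G = {}"
  by (auto simp: zeros_of_def poles_of_def)

lemma zero_notin: "0 \<notin> {z. G z = 0}"
  using G0 by auto

lemma analytic_nonpole: "\<not> is_pole G z \<Longrightarrow> G analytic_on {z}"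
  using nicely_meromorphic_on_imp_analytic_at[OF mero] by auto

lemma ev_nonzero: "eventually (\<lambda>w. G w \<noteq> 0) (at z)"
proof -
  have "\<not> z islimpt {z. G z = 0}" using Zall_sparse by (simp add: sparse_in_open)
  thus ?thesis by (simp add: islimpt_conv_frequently_at frequently_def)
qed

lemma mero_at: "G meromorphic_on {z}"
  using mero by (auto simp: nicely_meromorphic_on_def intro: meromorphic_on_subset)

lemma pole_local:
  assumes "z \<in> poles_of G"
  obtains r g where "r > 0" "g holomorphic_on cball z r" "\<And>w. w \<in> cball z r \<Longrightarrow> g w \<noteq> 0"
    "\<And>w. w \<in> cball z r - {z} \<Longrightarrow> G w = g w / (w - z)"
proof -
  have n: "zorder G z = -1" using simple_poles assms by auto
  have "zor_poly G z z \<noteq> 0 \<and> (\<exists>r. r>0 \<and> zor_poly G z holomorphic_on cball z r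
    \<and> (\<forall>w\<in>cball z r - {z}. G w = zor_poly G z w * (w-z) powi (zorder G z) \<and> zor_poly G z w \<noteq>0))"
    by (rule zorder_exist)
       (use mero_at[of z] ev_nonzero[of z] in \<open>auto simp: meromorphic_on_isolated_singularity meromorphic_on_not_essential eventually_frequently\<close>)
  then obtain r where r: "r > 0" "zor_poly G z holomorphic_on cball z r" "zor_poly G z z \<noteq> 0"
    "\<And>w. w\<in>cball z r - {z} \<Longrightarrow> G w = zor_poly G z w * (w-z) powi (-1) \<and> zor_poly G z w \<noteq>0"
    unfolding n by blast
  show ?thesis
  proof (rule that[OF r(1,2)])
    fix w assume "w \<in> cball z r"
    thus "zor_poly G z w \<noteq> 0" using r(3,4) by (cases "w = z") auto
  next
    fix w assume "w \<in> cball z r - {z}"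
    thus "G w = zor_poly G z w / (w - z)" using r(4) by (simp add: power_int_minus divide_inverse)
  qed
qed

lemma zero_local:
  assumes "z \<in> zeros_of G"
  obtains r g where "r > 0" "g holomorphic_on cball z r" "\<And>w. w \<in> cball z r \<Longrightarrow> g w \<noteq> 0"
    "\<And>w. w \<in> cball z r \<Longrightarrow> G w = g w * (w - z)"
proof -
  have n: "zorder G z = 1" using simple_zeros assms by auto
  have "zor_poly G z z \<noteq> 0 \<and> (\<exists>r. r>0 \<and> zor_poly G z holomorphic_on cball z r
    \<and> (\<forall>w\<in>cball z r - {z}. G w = zor_poly G z w * (w-z) powi (zorder G z) \<and> zor_poly G z w \<noteq>0))"
    by (rule zorder_exist)
       (use mero_at[of z] ev_nonzero[of z] in \<open>auto simp: meromorphic_on_isolated_singularity meromorphic_on_not_essential eventually_frequently\<close>)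
  then obtain r where r: "r > 0" "zor_poly G z holomorphic_on cball z r" "zor_poly G z z \<noteq> 0"
    "\<And>w. w\<in>cball z r - {z} \<Longrightarrow> G w = zor_poly G z w * (w-z) powi 1 \<and> zor_poly G z w \<noteq>0"
    unfolding n by blast
  show ?thesis
  proof (rule that[OF r(1,2)])
    fix w assume "w \<in> cball z r"
    thus "zor_poly G z w \<noteq> 0" using r(3,4) by (cases "w = z") auto
  next
    fix w assume w: "w \<in> cball z r"
    have "G z = 0" using assms by (auto simp: zeros_of_def)
    thus "G w = zor_poly G z w * (w - z)" using r(4) w by (cases "w = z") auto
  qed
qed

end

context thmG
begin

definition FFq :: "complex set \<Rightarrow> complex set \<Rightarrow> complex \<Rightarrow> complex" where
  "FFq Pf Zf w = G w * (\<Prod>p\<in>Pf. 1 - w / p) / (\<Prod>a\<in>Zf. 1 - w / a)"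

lemma isolate:
  obtains r where "r > 0" "\<And>w. w \<in> ball z r \<Longrightarrow> G w = 0 \<Longrightarrow> w = z"
proof -
  obtain B where B: "open B" "z \<in> B" "\<forall>y\<in>B. y \<noteq> z \<longrightarrow> y \<notin> {z. G z = 0}"
    by (rule sparse_in_not_in[OF Zall_sparse, of z]) (rule UNIV_I)
  obtain r where "r > 0" "ball z r \<subseteq> B" using B open_contains_ball by blast
  thus ?thesis using that B by blast
qed

lemma prod_nz: "finite A \<Longrightarrow> (\<And>a. a \<in> A \<Longrightarrow> f a \<noteq> (0::complex)) \<Longrightarrow> prod f A \<noteq> 0"
  by (simp add: prod_zero_iff)

lemma factor_nz:
  assumes "a \<in> {z. G z = 0}" "w \<noteq> a"
  shows "1 - w / a \<noteq> 0"
proof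
  assume "1 - w / a = 0"
  moreover have "a \<noteq> 0" using assms zero_notin by auto
  ultimately have "w = a" by (simp add: field_simps)
  thus False using assms by simp
qed

lemma FF_local:
  assumes fin: "finite Pf" "Pf \<subseteq> poles_of G" "finite Zf" "Zf \<subseteq> zeros_of G"
    and z: "z \<notin> {z. G z = 0} - (Pf \<union> Zf)"
  obtains S H where "open S" "z \<in> S" "H holomorphic_on S" "\<And>w. w \<in> S \<Longrightarrow> H w \<noteq> 0"
    "\<And>w. w \<in> S - {z} \<Longrightarrow> FFq Pf Zf w = H w" "z \<notin> {z. G z = 0} \<Longrightarrow> H z = FFq Pf Zf z"
proof -
  have PZ: "Pf \<subseteq> {z. G z = 0}" "Zf \<subseteq> {z. G z = 0}" using fin Zall_eq by auto
  have disj: "Pf \<inter> Zf = {}" using fin poles_zeros_disj by auto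
  obtain r0 where r0: "r0 > 0" "\<And>w. w \<in> ball z r0 \<Longrightarrow> G w = 0 \<Longrightarrow> w = z"
    using isolate by blast
  consider "z \<in> Pf" | "z \<in> Zf" | "z \<notin> {z. G z = 0}" using z by blast
  then show ?thesis
  proof cases
    case 1
    hence zP: "z \<in> poles_of G" using fin by auto
    have z0: "z \<noteq> 0" using PZ 1 zero_notin by auto
    obtain r g where rg: "r > 0" "g holomorphic_on cball z r" "\<And>w. w \<in> cball z r \<Longrightarrow> g w \<noteq> 0"
      "\<And>w. w \<in> cball z r - {z} \<Longrightarrow> G w = g w / (w - z)"
      using pole_local[OF zP] by blast
    define S where "S = ball z (min r r0)"
    define H where "H = (\<lambda>w. g w * (-1/z) * (\<Prod>p\<in>Pf-{z}. 1 - w / p) / (\<Prod>a\<in>Zf. 1 - w / a))"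
    have Ssub: "S \<subseteq> cball z r" "S \<subseteq> ball z r0" by (auto simp: S_def)
    have denom: "(\<Prod>a\<in>Zf. 1 - w / a) \<noteq> 0" if w: "w \<in> S" for w
    proof -
      have "1 - w / a \<noteq> 0" if a: "a \<in> Zf" for a
      proof (rule factor_nz)
        show "a \<in> {z. G z = 0}" using a PZ by auto
        show "w \<noteq> a"
        proof
          assume "w = a"
          hence "a \<in> ball z r0" using Ssub(2) w by auto
          moreover have "G a = 0" using a PZ by auto
          ultimately have "a = z" using r0(2) by blast
          thus False using a 1 disj by auto
        qed
      qed
      thus ?thesis using fin(3) by (intro prod_nz) auto
    qed
    have numer: "(\<Prod>p\<in>Pf-{z}. 1 - w / p) \<noteq> 0" if w: "w \<in> S" for w
    proof -
      have "1 - w / p \<noteq> 0" if a: "p \<in> Pf-{z}" for p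
      proof (rule factor_nz)
        show "p \<in> {z. G z = 0}" using a PZ by auto
        show "w \<noteq> p"
        proof
          assume "w = p"
          hence "p \<in> ball z r0" using Ssub(2) w by auto
          moreover have "G p = 0" using a PZ by auto
          ultimately have "p = z" using r0(2) by blast
          thus False using a by auto
        qed
      qed
      thus ?thesis using fin(1) by (intro prod_nz) auto
    qed
    show ?thesis
    proof (rule that[of S H])
      show "open S" "z \<in> S" using rg r0 by (auto simp: S_def)
      show "H holomorphic_on S" unfolding H_def
        by (intro holomorphic_intros holomorphic_on_subset[OF rg(2) Ssub(1)]) (use denom in auto)
      show "H w \<noteq> 0" if "w \<in> S" for w
        using that denom numer rg(3) Ssub z0 by (auto simp: H_def)
      show "FFq Pf Zf w = H w" if w: "w \<in> S - {z}" for w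
      proof -
        have wz: "w \<noteq> z" using w by auto
        have "(\<Prod>p\<in>Pf. 1 - w / p) = (1 - w / z) * (\<Prod>p\<in>Pf-{z}. 1 - w / p)"
          using fin(1) 1 by (rule prod.remove)
        moreover have "G w = g w / (w - z)" using rg(4) w Ssub by auto
        moreover have "g w / (w - z) * (1 - w / z) = g w * (-1/z)"
          using wz z0 by (simp add: field_simps)
        ultimately show ?thesis by (simp add: FFq_def H_def mult.assoc[symmetric])
      qed
      show "H z = FFq Pf Zf z" if "z \<notin> {z. G z = 0}"
        using that 1 PZ by auto
    qed
  next
    case 2
    hence zZ: "z \<in> zeros_of G" using fin by auto
    have z0: "z \<noteq> 0" using PZ 2 zero_notin by auto
    obtain r g where rg: "r > 0" "g holomorphic_on cball z r" "\<And>w. w \<in> cball z r \<Longrightarrow> g w \<noteq> 0"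
      "\<And>w. w \<in> cball z r \<Longrightarrow> G w = g w * (w - z)"
      using zero_local[OF zZ] by blast
    define S where "S = ball z (min r r0)"
    define H where "H = (\<lambda>w. g w * (\<Prod>p\<in>Pf. 1 - w / p) / ((-1/z) * (\<Prod>a\<in>Zf-{z}. 1 - w / a)))"
    have Ssub: "S \<subseteq> cball z r" "S \<subseteq> ball z r0" by (auto simp: S_def)
    have denom: "(\<Prod>a\<in>Zf-{z}. 1 - w / a) \<noteq> 0" if w: "w \<in> S" for w
    proof -
      have "1 - w / a \<noteq> 0" if a: "a \<in> Zf-{z}" for a
      proof (rule factor_nz)
        show "a \<in> {z. G z = 0}" using a PZ by auto
        show "w \<noteq> a"
        proof
          assume "w = a"
          hence "a \<in> ball z r0" using Ssub(2) w by auto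
          moreover have "G a = 0" using a PZ by auto
          ultimately have "a = z" using r0(2) by blast
          thus False using a by auto
        qed
      qed
      thus ?thesis using fin(3) by (intro prod_nz) auto
    qed
    have numer: "(\<Prod>p\<in>Pf. 1 - w / p) \<noteq> 0" if w: "w \<in> S" for w
    proof -
      have "1 - w / p \<noteq> 0" if a: "p \<in> Pf" for p
      proof (rule factor_nz)
        show "p \<in> {z. G z = 0}" using a PZ by auto
        show "w \<noteq> p"
        proof
          assume "w = p"
          hence "p \<in> ball z r0" using Ssub(2) w by auto
          moreover have "G p = 0" using a PZ by auto
          ultimately have "p = z" using r0(2) by blast
          thus False using a 2 disj by auto
        qed
      qed
      thus ?thesis using fin(1) by (intro prod_nz) auto
    qed
    show ?thesis
    proof (rule that[of S H])
      show "open S" "z \<in> S" using rg r0 by (auto simp: S_def)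
      show "H holomorphic_on S" unfolding H_def
        by (intro holomorphic_intros holomorphic_on_subset[OF rg(2) Ssub(1)]) (use denom z0 in auto)
      show "H w \<noteq> 0" if "w \<in> S" for w
        using that denom numer rg(3) Ssub z0 by (auto simp: H_def)
      show "FFq Pf Zf w = H w" if w: "w \<in> S - {z}" for w
      proof -
        have wz: "w \<noteq> z" using w by auto
        have "(\<Prod>a\<in>Zf. 1 - w / a) = (1 - w / z) * (\<Prod>a\<in>Zf-{z}. 1 - w / a)"
          using fin(3) 2 by (rule prod.remove)
        moreover have "G w = g w * (w - z)" using rg(4) w Ssub by auto
        moreover have "1 - w / z \<noteq> 0" using wz z0 by (simp add: field_simps)
        moreover have Y: "(\<Prod>a\<in>Zf-{z}. 1 - w / a) \<noteq> 0" using denom w by auto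
        ultimately have "FFq Pf Zf w = g w * (\<Prod>p\<in>Pf. 1 - w / p) * ((w - z) / (1 - w / z)) / (\<Prod>a\<in>Zf-{z}. 1 - w / a)"
          by (simp add: FFq_def)
        also have "(w - z) / (1 - w / z) = - z" using wz z0 by (simp add: field_simps)
        also have "g w * (\<Prod>p\<in>Pf. 1 - w / p) * (- z) / (\<Prod>a\<in>Zf-{z}. 1 - w / a) = H w"
          using z0 Y by (simp add: H_def field_simps)
        finally show ?thesis .
      qed
      show "H z = FFq Pf Zf z" if "z \<notin> {z. G z = 0}"
        using that 2 PZ by auto
    qed
  next
    case 3
    have np: "\<not> is_pole G z" using 3 poles_sub by (auto simp: poles_of_def)
    obtain T where T: "open T" "z \<in> T" "G holomorphic_on T"
      using analytic_nonpole[OF np] analytic_at by blast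
    have "open (T - {z. G z = 0})" using T(1) Zall_closed by auto
    then obtain e where e: "e > 0" "ball z e \<subseteq> T - {z. G z = 0}"
      using T(2) 3 open_contains_ball by blast
    define S where "S = ball z e"
    have Sn: "\<And>w. w \<in> S \<Longrightarrow> G w \<noteq> 0" using e by (auto simp: S_def)
    have fnz: "\<And>w a. w \<in> S \<Longrightarrow> a \<in> {z. G z = 0} \<Longrightarrow> 1 - w / a \<noteq> 0"
      using Sn by (intro factor_nz) auto
    have denom: "(\<Prod>a\<in>Zf. 1 - w / a) \<noteq> 0" if w: "w \<in> S" for w
      using fin(3) PZ fnz[OF w] by (intro prod_nz) auto
    have numer: "(\<Prod>p\<in>Pf. 1 - w / p) \<noteq> 0" if w: "w \<in> S" for w
      using fin(1) PZ fnz[OF w] by (intro prod_nz) auto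
    show ?thesis
    proof (rule that[of S "FFq Pf Zf"])
      show "open S" "z \<in> S" using e by (auto simp: S_def)
      show "FFq Pf Zf holomorphic_on S" unfolding FFq_def
        by (intro holomorphic_intros holomorphic_on_subset[OF T(3)]) (use e denom in \<open>auto simp: S_def\<close>)
      show "FFq Pf Zf w \<noteq> 0" if "w \<in> S" for w
        using that denom numer Sn by (auto simp: FFq_def)
    qed auto
  qed
qed

end

context thmG
begin

lemma FF_props:
  assumes fin: "finite Pf" "Pf \<subseteq> poles_of G" "finite Zf" "Zf \<subseteq> zeros_of G"
  defines "U \<equiv> - ({z. G z = 0} - (Pf \<union> Zf))"
  shows "open U" "remove_sings (FFq Pf Zf) holomorphic_on U"
    "\<And>w. w \<in> U \<Longrightarrow> remove_sings (FFq Pf Zf) w \<noteq> 0"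
    "\<And>w. G w \<noteq> 0 \<Longrightarrow> remove_sings (FFq Pf Zf) w = FFq Pf Zf w"
proof -
  show "open U" unfolding U_def by (rule open_Compl[OF Zall_diff_closed])
  have an: "remove_sings (FFq Pf Zf) analytic_on {z}" if "z \<in> U" for z
  proof -
    have zU: "z \<notin> {z. G z = 0} - (Pf \<union> Zf)" using that by (simp add: U_def)
    obtain S H where SH: "open S" "z \<in> S" "H holomorphic_on S" "\<And>u. u \<in> S \<Longrightarrow> H u \<noteq> 0"
      "\<And>u. u \<in> S - {z} \<Longrightarrow> FFq Pf Zf u = H u" "z \<notin> {z. G z = 0} \<Longrightarrow> H z = FFq Pf Zf z"
      by (rule FF_local[OF fin zU]) blast
    show ?thesis by (rule remove_sings_local_analytic[OF SH(1,2,3,5)])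
  qed
  hence "remove_sings (FFq Pf Zf) analytic_on U"
    unfolding analytic_on_analytic_at[of _ U] by blast
  thus "remove_sings (FFq Pf Zf) holomorphic_on U"
    by (rule analytic_imp_holomorphic)
  show "remove_sings (FFq Pf Zf) w \<noteq> 0" if "w \<in> U" for w
  proof -
    have zU: "w \<notin> {z. G z = 0} - (Pf \<union> Zf)" using that by (simp add: U_def)
    obtain S H where SH: "open S" "w \<in> S" "H holomorphic_on S" "\<And>u. u \<in> S \<Longrightarrow> H u \<noteq> 0"
      "\<And>u. u \<in> S - {w} \<Longrightarrow> FFq Pf Zf u = H u" "w \<notin> {z. G z = 0} \<Longrightarrow> H w = FFq Pf Zf w"
      by (rule FF_local[OF fin zU]) blast
    have "remove_sings (FFq Pf Zf) w = H w"
      by (rule remove_sings_local[OF SH(1,2,3,5) SH(2)])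
    thus ?thesis using SH(4)[OF SH(2)] by simp
  qed
  show "remove_sings (FFq Pf Zf) w = FFq Pf Zf w" if "G w \<noteq> 0" for w
  proof -
    have zU: "w \<notin> {z. G z = 0} - (Pf \<union> Zf)" using that by simp
    obtain S H where SH: "open S" "w \<in> S" "H holomorphic_on S" "\<And>u. u \<in> S \<Longrightarrow> H u \<noteq> 0"
      "\<And>u. u \<in> S - {w} \<Longrightarrow> FFq Pf Zf u = H u" "w \<notin> {z. G z = 0} \<Longrightarrow> H w = FFq Pf Zf w"
      by (rule FF_local[OF fin zU]) blast
    have "remove_sings (FFq Pf Zf) w = H w"
      by (rule remove_sings_local[OF SH(1,2,3,5) SH(2)])
    thus ?thesis using SH(6) that by simp
  qed
qed

lemma FF_logderiv:
  assumes fin: "finite Pf" "Pf \<subseteq> poles_of G" "finite Zf" "Zf \<subseteq> zeros_of G"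
    and u: "G u \<noteq> 0"
  shows "deriv (remove_sings (FFq Pf Zf)) u / remove_sings (FFq Pf Zf) u
       = deriv G u / G u + (\<Sum>p\<in>Pf. 1 / (u - p)) - (\<Sum>a\<in>Zf. 1 / (u - a))"
proof -
  have PZ: "Pf \<subseteq> {z. G z = 0}" "Zf \<subseteq> {z. G z = 0}" using fin Zall_eq by auto
  have np: "\<not> is_pole G u" using u poles_sub by (auto simp: poles_of_def)
  obtain T where T: "open T" "u \<in> T" "G holomorphic_on T"
    using analytic_nonpole[OF np] analytic_at by blast
  define S where "S = T - {z. G z = 0}"
  have S: "open S" "u \<in> S" using T Zall_closed u by (auto simp: S_def)
  have eqS: "FFq Pf Zf w = remove_sings (FFq Pf Zf) w" if "w \<in> S" for w
    using FF_props(4)[OF fin, of w] that by (auto simp: S_def)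
  have fnz: "\<And>a. a \<in> {z. G z = 0} \<Longrightarrow> 1 - u / a \<noteq> 0"
    using u by (intro factor_nz) auto
  have a0: "\<And>a. a \<in> {z. G z = 0} \<Longrightarrow> a \<noteq> 0" using zero_notin by auto
  define A where "A = (\<lambda>w. \<Prod>p\<in>Pf. 1 - w / p)"
  define B where "B = (\<lambda>w. \<Prod>a\<in>Zf. 1 - w / a)"
  define SP where "SP = (\<Sum>p\<in>Pf. 1 / (u - p))"
  define SZ where "SZ = (\<Sum>a\<in>Zf. 1 / (u - a))"
  have Anz: "A u \<noteq> 0" unfolding A_def using fin(1) PZ fnz by (intro prod_nz) auto
  have Bnz: "B u \<noteq> 0" unfolding B_def using fin(3) PZ fnz by (intro prod_nz) auto
  have dfac: "((\<lambda>w. 1 - w / c) has_field_derivative (- 1 / c)) (at u)" if "c \<noteq> 0" for c :: complex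
    using that by (auto intro!: derivative_eq_intros)
  have sumP: "(\<Sum>p\<in>Pf. (- 1 / p) / (1 - u / p)) = SP"
    unfolding SP_def
  proof (rule sum.cong[OF refl])
    fix p assume p: "p \<in> Pf"
    have pz: "G p = 0" using p PZ by blast
    have "p \<noteq> 0" "u \<noteq> p" using a0[of p] pz u by auto
    thus "(- 1 / p) / (1 - u / p) = 1 / (u - p)" by (simp add: field_simps)
  qed
  have sumZ: "(\<Sum>a\<in>Zf. (- 1 / a) / (1 - u / a)) = SZ"
    unfolding SZ_def
  proof (rule sum.cong[OF refl])
    fix p assume p: "p \<in> Zf"
    have pz: "G p = 0" using p PZ by blast
    have "p \<noteq> 0" "u \<noteq> p" using a0[of p] pz u by auto
    thus "(- 1 / p) / (1 - u / p) = 1 / (u - p)" by (simp add: field_simps)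
  qed
  have dA: "(A has_field_derivative A u * SP) (at u)"
  proof -
    have "((\<lambda>w. \<Prod>p\<in>Pf. 1 - w / p) has_field_derivative
      (\<Prod>p\<in>Pf. 1 - u / p) * (\<Sum>p\<in>Pf. (- 1 / p) / (1 - u / p))) (at u)"
    proof (rule has_field_derivative_prod')
      fix x assume x: "x \<in> Pf"
      have xz: "x \<in> {z. G z = 0}" using x PZ by blast
      show "1 - u / x \<noteq> 0" using fnz[OF xz] .
      show "((\<lambda>w. 1 - w / x) has_field_derivative - 1 / x) (at u)" using dfac a0[OF xz] by blast
    qed
    thus ?thesis unfolding A_def sumP .
  qed
  have dB: "(B has_field_derivative B u * SZ) (at u)"
  proof -
    have "((\<lambda>w. \<Prod>p\<in>Zf. 1 - w / p) has_field_derivative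
      (\<Prod>p\<in>Zf. 1 - u / p) * (\<Sum>p\<in>Zf. (- 1 / p) / (1 - u / p))) (at u)"
    proof (rule has_field_derivative_prod')
      fix x assume x: "x \<in> Zf"
      have xz: "x \<in> {z. G z = 0}" using x PZ by blast
      show "1 - u / x \<noteq> 0" using fnz[OF xz] .
      show "((\<lambda>w. 1 - w / x) has_field_derivative - 1 / x) (at u)" using dfac a0[OF xz] by blast
    qed
    thus ?thesis unfolding B_def sumZ .
  qed
  have dG: "(G has_field_derivative deriv G u) (at u)"
    by (rule holomorphic_derivI[OF T(3,1,2)])
  have FFeq: "FFq Pf Zf = (\<lambda>w. G w * A w / B w)" by (auto simp: FFq_def A_def B_def fun_eq_iff)
  have "((\<lambda>w. G w * A w / B w) has_field_derivative
          ((deriv G u * A u + A u * SP * G u) * B u - G u * A u * (B u * SZ)) / (B u * B u)) (at u)"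
    by (rule derivative_eq_intros dG dA dB Bnz refl)+
  also have "((deriv G u * A u + A u * SP * G u) * B u - G u * A u * (B u * SZ)) / (B u * B u)
      = FFq Pf Zf u * (deriv G u / G u + SP - SZ)"
    using u Anz Bnz by (simp add: FFeq field_simps)
  finally have dF: "(FFq Pf Zf has_field_derivative FFq Pf Zf u * (deriv G u / G u + SP - SZ)) (at u)"
    unfolding FFeq .
  have "(remove_sings (FFq Pf Zf) has_field_derivative FFq Pf Zf u * (deriv G u / G u + SP - SZ)) (at u)"
    by (rule has_field_derivative_transform_within_open[OF dF S]) (rule eqS)
  hence "deriv (remove_sings (FFq Pf Zf)) u = FFq Pf Zf u * (deriv G u / G u + SP - SZ)"
    by (rule DERIV_imp_deriv)
  moreover have "remove_sings (FFq Pf Zf) u = FFq Pf Zf u" using eqS S by auto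
  moreover have "FFq Pf Zf u \<noteq> 0" using u Anz Bnz by (simp add: FFeq)
  ultimately show ?thesis by (simp add: SP_def SZ_def)
qed

end

context thmG
begin

definition Pin :: "real \<Rightarrow> complex set" where "Pin R = {p \<in> poles_of G. norm p < R}"
definition Zin :: "real \<Rightarrow> complex set" where "Zin R = {a \<in> zeros_of G. norm a < R}"
definition RF :: "real \<Rightarrow> complex \<Rightarrow> complex" where "RF R = remove_sings (FFq (Pin R) (Zin R))"

lemma fin_in: "finite (Pin R)" "Pin R \<subseteq> poles_of G" "finite (Zin R)" "Zin R \<subseteq> zeros_of G"
proof -
  have "Pin R \<subseteq> {z. G z = 0} \<inter> cball 0 R" "Zin R \<subseteq> {z. G z = 0} \<inter> cball 0 R"
    using Zall_eq by (auto simp: Pin_def Zin_def)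
  thus "finite (Pin R)" "finite (Zin R)" using Zall_finite_cball finite_subset by blast+
qed (auto simp: Pin_def Zin_def)

lemma RF_props:
  shows "RF R holomorphic_on ball 0 R" "\<And>v. norm v < R \<Longrightarrow> RF R v \<noteq> 0"
    "\<And>v. G v \<noteq> 0 \<Longrightarrow> RF R v = FFq (Pin R) (Zin R) v"
proof -
  have sub: "ball 0 R \<subseteq> - ({z. G z = 0} - (Pin R \<union> Zin R))"
    using Zall_eq by (auto simp: Pin_def Zin_def)
  show "RF R holomorphic_on ball 0 R"
    unfolding RF_def by (rule holomorphic_on_subset[OF FF_props(2)[OF fin_in] sub])
  show "RF R v \<noteq> 0" if "norm v < R" for v
    unfolding RF_def by (rule FF_props(3)[OF fin_in]) (use that sub in auto)
  show "RF R v = FFq (Pin R) (Zin R) v" if "G v \<noteq> 0" for v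
    unfolding RF_def by (rule FF_props(4)[OF fin_in that])
qed

lemma RF_eq:
  assumes "G v \<noteq> 0"
  shows "RF R v * trunc_prod (zeros_of G) R v = G v * trunc_prod (poles_of G) R v"
proof -
  have B: "trunc_prod (zeros_of G) R v \<noteq> 0" unfolding trunc_prod_def
    using fin_in(3,4)[of R] assms Zall_eq by (intro prod_nz factor_nz) (auto simp: Zin_def)
  have "RF R v = G v * trunc_prod (poles_of G) R v / trunc_prod (zeros_of G) R v"
    using RF_props(3)[OF assms] by (simp add: FFq_def trunc_prod_def Pin_def Zin_def)
  thus ?thesis using B by simp
qed

lemma RF_0: "RF R 0 = G 0"
  using RF_props(3)[of 0] G0 by (simp add: FFq_def)

lemma RF_bound:
  assumes R: "R > 0" and circ: "\<And>z. norm z = R \<Longrightarrow> G z \<noteq> 0"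
    and bnd: "\<And>z. norm z = R \<Longrightarrow> norm (deriv G z / G z) \<le> C / R" and C: "C \<ge> 0"
    and r: "0 \<le> r" "r < R" and v: "norm v \<le> r"
  shows "norm (RF R v - G 0) \<le> norm (G 0) * (C / (R - r) * r * exp (C / (R - r) * r))"
proof -
  define U where "U = - ({z. G z = 0} - (Pin R \<union> Zin R))"
  have fR: "finite (Pin R)" "Pin R \<subseteq> poles_of G" "finite (Zin R)" "Zin R \<subseteq> zeros_of G"
    by (rule fin_in)+
  have U: "open U" "RF R holomorphic_on U" "\<And>w. w \<in> U \<Longrightarrow> RF R w \<noteq> 0"
    using FF_props(1,2)[OF fR] FF_props(3)[OF fR] unfolding U_def RF_def by auto
  have cb: "cball 0 R \<subseteq> U"
  proof
    fix w :: complex assume w: "w \<in> cball 0 R"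
    show "w \<in> U"
    proof (rule ccontr)
      assume "w \<notin> U"
      hence "G w = 0" "w \<notin> Pin R" "w \<notin> Zin R" by (auto simp: U_def)
      hence "norm w \<ge> R" using Zall_eq by (auto simp: Pin_def Zin_def)
      hence "norm w = R" using w by simp
      thus False using circ \<open>G w = 0\<close> by blast
    qed
  qed
  define h where "h = (\<lambda>w. deriv (RF R) w / RF R w)"
  have hh: "h holomorphic_on U" unfolding h_def
    using holomorphic_deriv[OF U(2,1)] U(2,3) by (intro holomorphic_on_divide) auto
  define c where "c = (\<lambda>a. if a \<in> Pin R then (1::complex) else -1)"
  have disj: "Pin R \<inter> Zin R = {}" using poles_zeros_disj fin_in by blast
  have hk: "h u = deriv G u / G u + (\<Sum>a\<in>Pin R \<union> Zin R. c a / (u - a))" if u: "norm u = R" for u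
  proof -
    have e1: "h u = deriv G u / G u + (\<Sum>p\<in>Pin R. 1 / (u - p)) - (\<Sum>a\<in>Zin R. 1 / (u - a))"
      unfolding h_def RF_def by (rule FF_logderiv[OF fR circ[OF u]])
    have "(\<Sum>a\<in>Pin R \<union> Zin R. c a / (u - a)) = (\<Sum>a\<in>Pin R. c a / (u - a)) + (\<Sum>a\<in>Zin R. c a / (u - a))"
      by (rule sum.union_disjoint) (use fR disj in auto)
    also have "(\<Sum>a\<in>Pin R. c a / (u - a)) = (\<Sum>p\<in>Pin R. 1 / (u - p))"
      by (rule sum.cong) (auto simp: c_def)
    also have "(\<Sum>a\<in>Zin R. c a / (u - a)) = (\<Sum>a\<in>Zin R. - (1 / (u - a)))"
      by (rule sum.cong) (use disj in \<open>auto simp: c_def\<close>)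
    also have "\<dots> = - (\<Sum>a\<in>Zin R. 1 / (u - a))" by (simp add: sum_negf)
    finally have e2: "(\<Sum>a\<in>Pin R \<union> Zin R. c a / (u - a)) = (\<Sum>p\<in>Pin R. 1 / (u - p)) - (\<Sum>a\<in>Zin R. 1 / (u - a))"
      by simp
    show ?thesis unfolding e1 e2 by simp
  qed
  have hb: "norm (h w) \<le> C / (R - norm w)" if w: "norm w < R" for w
    by (rule cauchy_logderiv_bound[OF U(1) cb R hh _ _ hk bnd C w])
       (use fin_in in \<open>auto simp: Pin_def Zin_def\<close>)
  have "norm (RF R v - RF R 0) \<le> norm (RF R 0) * (C / (R - r) * r * exp (C / (R - r) * r))"
  proof (rule logderiv_exp_bound[OF RF_props(1) RF_props(2) r _ v])
    fix z :: complex assume z: "z \<in> cball 0 r"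
    hence zr: "norm z \<le> r" by simp
    have "norm (deriv (RF R) z / RF R z) \<le> C / (R - norm z)"
      using hb[of z] zr r by (simp add: h_def)
    also have "\<dots> \<le> C / (R - r)"
      using zr r C by (intro divide_left_mono) auto
    finally show "norm (deriv (RF R) z / RF R z) \<le> C / (R - r)" .
  qed simp
  thus ?thesis by (simp add: RF_0)
qed

end

lemma summ_tail:
  fixes P :: "complex set"
  assumes summ: "(\<lambda>p. 1/(norm p)^2) summable_on P" and e: "e > 0"
  obtains \<rho> where "\<And>E. finite E \<Longrightarrow> E \<subseteq> {p\<in>P. norm p \<ge> \<rho>} \<Longrightarrow> (\<Sum>p\<in>E. 1/(norm p)^2) \<le> e"
proof -
  define f where "f = (\<lambda>p::complex. 1/(norm p)^2)"
  define S where "S = infsum f P"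
  have "(f has_sum S) P" using summ by (simp add: S_def f_def)
  hence "(sum f \<longlongrightarrow> S) (finite_subsets_at_top P)" by (simp add: has_sum_def)
  hence "eventually (\<lambda>X. dist (sum f X) S < e/2) (finite_subsets_at_top P)"
    by (rule tendstoD) (simp add: e)
  hence "\<exists>X. finite X \<and> X \<subseteq> P \<and> (\<forall>Y. finite Y \<and> X \<subseteq> Y \<and> Y \<subseteq> P \<longrightarrow> dist (sum f Y) S < e/2)"
    by (simp only: eventually_finite_subsets_at_top)
  then obtain F0 where F0: "finite F0" "F0 \<subseteq> P"
    "\<forall>Y. finite Y \<and> F0 \<subseteq> Y \<and> Y \<subseteq> P \<longrightarrow> dist (sum f Y) S < e/2"
    by (elim exE conjE)
  define \<rho> where "\<rho> = (\<Sum>p\<in>F0. norm p) + 1"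
  show ?thesis
  proof (rule that[of \<rho>])
    fix E assume E: "finite E" "E \<subseteq> {p\<in>P. norm p \<ge> \<rho>}"
    have disj: "E \<inter> F0 = {}"
    proof (rule ccontr)
      assume "E \<inter> F0 \<noteq> {}"
      then obtain p where p: "p \<in> E" "p \<in> F0" by blast
      have "norm p \<le> (\<Sum>p\<in>F0. norm p)" by (rule member_le_sum[OF p(2)]) (use F0(1) in auto)
      moreover have "norm p \<ge> \<rho>" using E p by auto
      ultimately show False by (simp add: \<rho>_def)
    qed
    have "sum f (F0 \<union> E) = sum f F0 + sum f E"
      using disj F0(1) E(1) by (subst sum.union_disjoint) auto
    moreover have h1: "dist (sum f (F0 \<union> E)) S < e/2" by (rule F0(3)[rule_format]) (use F0 E in auto)
    moreover have h2: "dist (sum f F0) S < e/2" by (rule F0(3)[rule_format]) (use F0 in auto)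
    have a1: "sum f (F0 \<union> E) - S < e/2" using h1 unfolding dist_real_def abs_less_iff by linarith
    have a2: "S - sum f F0 < e/2" using h2 unfolding dist_real_def abs_less_iff by linarith
    ultimately have "sum f E < e" using a1 a2 by linarith
    thus "(\<Sum>p\<in>E. 1/(norm p)^2) \<le> e" by (simp add: f_def)
  qed
qed

lemma summ_bound:
  fixes P :: "complex set"
  assumes summ: "(\<lambda>p. 1/(norm p)^2) summable_on P"
  obtains M where "M \<ge> 0" "\<And>E. finite E \<Longrightarrow> E \<subseteq> P \<Longrightarrow> (\<Sum>p\<in>E. 1/(norm p)^2) \<le> M"
proof -
  define f where "f = (\<lambda>p::complex. 1/(norm p)^2)"
  define S where "S = infsum f P"
  have "(f has_sum S) P" using summ by (simp add: S_def f_def)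
  hence "(sum f \<longlongrightarrow> S) (finite_subsets_at_top P)" by (simp add: has_sum_def)
  hence "eventually (\<lambda>X. dist (sum f X) S < 1) (finite_subsets_at_top P)"
    by (rule tendstoD) simp
  hence "\<exists>X. finite X \<and> X \<subseteq> P \<and> (\<forall>Y. finite Y \<and> X \<subseteq> Y \<and> Y \<subseteq> P \<longrightarrow> dist (sum f Y) S < 1)"
    by (simp only: eventually_finite_subsets_at_top)
  then obtain F0 where F0: "finite F0" "F0 \<subseteq> P"
    "\<forall>Y. finite Y \<and> F0 \<subseteq> Y \<and> Y \<subseteq> P \<longrightarrow> dist (sum f Y) S < 1"
    by (elim exE conjE)
  show ?thesis
  proof (rule that[of "\<bar>S\<bar> + 1"])
    fix E assume E: "finite E" "E \<subseteq> P"
    have "sum f E \<le> sum f (F0 \<union> E)"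
      using E F0 by (intro sum_mono2) (auto simp: f_def)
    moreover have "dist (sum f (F0 \<union> E)) S < 1" by (rule F0(3)[rule_format]) (use F0 E in auto)
    ultimately have "sum f E \<le> \<bar>S\<bar> + 1" using abs_ge_self[of S] by (simp add: dist_real_def abs_less_iff)
    thus "(\<Sum>p\<in>E. 1/(norm p)^2) \<le> \<bar>S\<bar> + 1" by (simp add: f_def)
  qed simp
qed

definition Tp :: "complex set \<Rightarrow> real \<Rightarrow> real \<Rightarrow> complex \<Rightarrow> complex" where
  "Tp P a s v = (\<Prod>p\<in>{p\<in>P. a \<le> norm p \<and> norm p < s}. 1 - (v/p)^2)"

lemma Tp_even: "Tp P a s (-v) = Tp P a s v"
  by (simp add: Tp_def)

lemma norm_sq_term:
  fixes v p :: complex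
  assumes "norm v \<le> r"
  shows "norm (- ((v / p)^2)) \<le> r^2 * (1 / (norm p)^2)"
proof -
  have "norm (- ((v / p)^2)) = (norm (v / p))^2" by (simp only: norm_minus_cancel norm_power)
  also have "\<dots> = (norm v)^2 / (norm p)^2" by (simp only: norm_divide power_divide)
  also have "\<dots> \<le> r^2 / (norm p)^2"
    using assms by (intro divide_right_mono power_mono) auto
  finally show ?thesis by simp
qed

lemma sum_sq_term:
  fixes v :: complex and E :: "complex set"
  assumes "norm v \<le> r"
  shows "(\<Sum>p\<in>E. norm (- ((v / p)^2))) \<le> r^2 * (\<Sum>p\<in>E. 1 / (norm p)^2)"
  unfolding sum_distrib_left by (intro sum_mono norm_sq_term assms)

lemma Tp_diff:
  fixes P :: "complex set"
  assumes locfin: "\<And>s. finite {p\<in>P. norm p < s}"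
    and ss: "s \<le> s'" and v: "norm v \<le> r"
    and M: "\<And>E. finite E \<Longrightarrow> E \<subseteq> P \<Longrightarrow> (\<Sum>p\<in>E. 1/(norm p)^2) \<le> M"
    and d: "\<And>E. finite E \<Longrightarrow> E \<subseteq> {p\<in>P. norm p \<ge> s} \<Longrightarrow> (\<Sum>p\<in>E. 1/(norm p)^2) \<le> \<delta>"
  shows "norm (Tp P a s' v - Tp P a s v) \<le> exp (r^2 * M) * (exp (r^2 * \<delta>) - 1)"
proof -
  define A where "A = {p\<in>P. a \<le> norm p \<and> norm p < s}"
  define A' where "A' = {p\<in>P. a \<le> norm p \<and> norm p < s'}"
  have fA': "finite A'" unfolding A'_def by (rule finite_subset[OF _ locfin[of s']]) auto
  have AA: "A \<subseteq> A'" using ss by (auto simp: A_def A'_def)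
  have fA: "finite A" using fA' AA finite_subset by blast
  have eq: "Tp P a s' v - Tp P a s v = (\<Prod>p\<in>A'. 1 + - ((v/p)^2)) - (\<Prod>p\<in>A. 1 + - ((v/p)^2))"
    by (simp add: Tp_def A_def A'_def)
  have "norm (Tp P a s' v - Tp P a s v)
     \<le> exp (\<Sum>p\<in>A. norm (- ((v/p)^2))) * (exp (\<Sum>p\<in>A'-A. norm (- ((v/p)^2))) - 1)"
    unfolding eq by (rule prod_diff_bound[OF fA' AA])
  also have "\<dots> \<le> exp (r^2 * M) * (exp (r^2 * \<delta>) - 1)"
  proof (rule mult_mono)
    have "(\<Sum>p\<in>A. norm (- ((v/p)^2))) \<le> r^2 * (\<Sum>p\<in>A. 1 / (norm p)^2)" by (rule sum_sq_term[OF v])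
    also have "\<dots> \<le> r^2 * M" using fA by (intro mult_left_mono M) (auto simp: A_def)
    finally show "exp (\<Sum>p\<in>A. norm (- ((v/p)^2))) \<le> exp (r^2 * M)" by simp
    have "(\<Sum>p\<in>A'-A. norm (- ((v/p)^2))) \<le> r^2 * (\<Sum>p\<in>A'-A. 1 / (norm p)^2)" by (rule sum_sq_term[OF v])
    also have "\<dots> \<le> r^2 * \<delta>" using fA' by (intro mult_left_mono d) (auto simp: A_def A'_def)
    finally show "exp (\<Sum>p\<in>A'-A. norm (- ((v/p)^2))) - 1 \<le> exp (r^2 * \<delta>) - 1" by simp
    have "0 \<le> (\<Sum>p\<in>A'-A. norm (- ((v/p)^2)))" by (rule sum_nonneg) simp
    thus "0 \<le> exp (\<Sum>p\<in>A'-A. norm (- ((v/p)^2))) - 1" by simp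
  qed simp
  finally show ?thesis .
qed

lemma Tp_near1:
  fixes P :: "complex set"
  assumes locfin: "\<And>s. finite {p\<in>P. norm p < s}" and v: "norm v \<le> r"
    and d: "\<And>E. finite E \<Longrightarrow> E \<subseteq> {p\<in>P. norm p \<ge> a} \<Longrightarrow> (\<Sum>p\<in>E. 1/(norm p)^2) \<le> \<delta>"
  shows "norm (Tp P a s v - 1) \<le> exp (r^2 * \<delta>) - 1"
proof -
  define A where "A = {p\<in>P. a \<le> norm p \<and> norm p < s}"
  have fA: "finite A" unfolding A_def by (rule finite_subset[OF _ locfin[of s]]) auto
  have "norm (Tp P a s v - 1) = norm ((\<Prod>p\<in>A. 1 + - ((v/p)^2)) - 1)"
    by (simp add: Tp_def A_def)
  also have "\<dots> \<le> exp (\<Sum>p\<in>A. norm (- ((v/p)^2))) - 1" by (rule prod_minus1_exp_bound)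
  also have "\<dots> \<le> exp (r^2 * \<delta>) - 1"
  proof -
    have "(\<Sum>p\<in>A. norm (- ((v/p)^2))) \<le> r^2 * (\<Sum>p\<in>A. 1 / (norm p)^2)" by (rule sum_sq_term[OF v])
    also have "\<dots> \<le> r^2 * \<delta>" using fA by (intro mult_left_mono d) (auto simp: A_def)
    finally show ?thesis by simp
  qed
  finally show ?thesis .
qed

definition Tlim :: "complex set \<Rightarrow> real \<Rightarrow> complex \<Rightarrow> complex" where
  "Tlim P a v = lim (\<lambda>n. Tp P a (real n) v)"

lemma Tlim_even: "Tlim P a (-v) = Tlim P a v"
  by (simp add: Tlim_def Tp_even)

lemma Tp_cauchy:
  fixes P :: "complex set"
  assumes locfin: "\<And>s. finite {p\<in>P. norm p < s}"
    and summ: "(\<lambda>p. 1/(norm p)^2) summable_on P" and r: "r \<ge> 0" and e: "e > 0"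
  shows "\<exists>\<rho>. \<forall>s s' v. \<rho> \<le> s \<longrightarrow> s \<le> s' \<longrightarrow> norm v \<le> r \<longrightarrow> norm (Tp P a s' v - Tp P a s v) \<le> e"
proof -
  obtain M where M: "M \<ge> 0" "\<And>E. finite E \<Longrightarrow> E \<subseteq> P \<Longrightarrow> (\<Sum>p\<in>E. 1/(norm p)^2) \<le> M"
    using summ_bound[OF summ] by blast
  define K where "K = exp (r^2 * M)"
  have K: "K > 0" by (simp add: K_def)
  define x where "x = min (1/2) (e / (2*K))"
  have x: "x > 0" "x \<le> 1/2" "x \<le> e / (2*K)" using e K by (auto simp: x_def)
  define \<delta> where "\<delta> = x / (r^2 + 1)"
  have "r^2 + 1 > 0" using zero_le_power2[of r] by linarith
  hence \<delta>: "\<delta> > 0" using x(1) unfolding \<delta>_def by simp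
  obtain \<rho> where \<rho>: "\<And>E. finite E \<Longrightarrow> E \<subseteq> {p\<in>P. norm p \<ge> \<rho>} \<Longrightarrow> (\<Sum>p\<in>E. 1/(norm p)^2) \<le> \<delta>"
    using summ_tail[OF summ \<delta>] by blast
  have key: "r^2 * \<delta> \<le> x"
  proof -
    have "r^2 * \<delta> = x * (r^2 / (r^2 + 1))" by (simp add: \<delta>_def field_simps)
    also have "\<dots> \<le> x * 1"
    proof (rule mult_left_mono)
      have "0 < r^2 + 1" using zero_le_power2[of r] by linarith
      thus "r^2 / (r^2 + 1) \<le> 1" by (simp add: divide_le_eq)
    qed (use x in auto)
    finally show ?thesis by simp
  qed
  have y0: "0 \<le> r^2 * \<delta>" using \<delta> by simp
  have "norm (exp (r^2 * \<delta>)) \<le> 1 + 2 * norm (r^2 * \<delta>)"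
    by (rule exp_bound_lemma) (use key x y0 in auto)
  hence exb: "exp (r^2 * \<delta>) - 1 \<le> 2 * x" using y0 key by simp
  have fin: "K * (exp (r^2 * \<delta>) - 1) \<le> e"
  proof -
    have "K * (exp (r^2 * \<delta>) - 1) \<le> K * (2 * x)" using K exb by (intro mult_left_mono) auto
    also have "\<dots> \<le> K * (2 * (e / (2*K)))" using K x by (intro mult_left_mono) auto
    also have "\<dots> = e" using K by simp
    finally show ?thesis .
  qed
  show ?thesis
  proof (rule exI[of _ \<rho>], intro allI impI)
    fix s s' :: real and v :: complex assume s: "\<rho> \<le> s" "s \<le> s'" and v: "norm v \<le> r"
    have "norm (Tp P a s' v - Tp P a s v) \<le> exp (r^2 * M) * (exp (r^2 * \<delta>) - 1)"
    proof (rule Tp_diff[OF locfin s(2) v M(2)])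
      fix E assume "finite E" "E \<subseteq> {p\<in>P. norm p \<ge> s}"
      thus "(\<Sum>p\<in>E. 1/(norm p)^2) \<le> \<delta>" using s by (intro \<rho>) auto
    qed auto
    thus "norm (Tp P a s' v - Tp P a s v) \<le> e" using fin by (simp add: K_def)
  qed
qed

lemma Tp_LIMSEQ:
  fixes P :: "complex set"
  assumes locfin: "\<And>s. finite {p\<in>P. norm p < s}"
    and summ: "(\<lambda>p. 1/(norm p)^2) summable_on P"
  shows "(\<lambda>n. Tp P a (real n) v) \<longlonglongrightarrow> Tlim P a v"
proof -
  have "Cauchy (\<lambda>n. Tp P a (real n) v)"
  proof (rule CauchyI)
    fix e :: real assume e: "e > 0"
    obtain \<rho> where \<rho>: "\<forall>s s' u. \<rho> \<le> s \<longrightarrow> s \<le> s' \<longrightarrow> norm u \<le> norm v \<longrightarrow> norm (Tp P a s' u - Tp P a s u) \<le> e/2"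
      using Tp_cauchy[OF locfin summ _, of "norm v" "e/2" a] e by auto
    show "\<exists>M. \<forall>m\<ge>M. \<forall>n\<ge>M. norm (Tp P a (real m) v - Tp P a (real n) v) < e"
    proof (rule exI[of _ "nat \<lceil>\<rho>\<rceil>"], intro allI impI)
      fix m n :: nat assume mn: "nat \<lceil>\<rho>\<rceil> \<le> m" "nat \<lceil>\<rho>\<rceil> \<le> n"
      hence mn': "\<rho> \<le> real m" "\<rho> \<le> real n" by linarith+
      show "norm (Tp P a (real m) v - Tp P a (real n) v) < e"
      proof (cases "m \<le> n")
        case True
        hence "norm (Tp P a (real n) v - Tp P a (real m) v) \<le> e/2" using \<rho> mn' by auto
        thus ?thesis using e by (simp add: norm_minus_commute)
      next
        case False
        hence "norm (Tp P a (real m) v - Tp P a (real n) v) \<le> e/2" using \<rho> mn' by auto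
        thus ?thesis using e by simp
      qed
    qed
  qed
  hence "convergent (\<lambda>n. Tp P a (real n) v)" by (simp add: Cauchy_convergent_iff)
  thus ?thesis by (simp add: convergent_LIMSEQ_iff Tlim_def)
qed

lemma Tlim_unif:
  fixes P :: "complex set"
  assumes locfin: "\<And>s. finite {p\<in>P. norm p < s}"
    and summ: "(\<lambda>p. 1/(norm p)^2) summable_on P" and r: "r \<ge> 0" and e: "e > 0"
  shows "\<exists>s0. \<forall>s\<ge>s0. \<forall>v\<in>cball 0 r. norm (Tp P a s v - Tlim P a v) \<le> e"
proof -
  obtain \<rho> where \<rho>: "\<forall>s s' u. \<rho> \<le> s \<longrightarrow> s \<le> s' \<longrightarrow> norm u \<le> r \<longrightarrow> norm (Tp P a s' u - Tp P a s u) \<le> e"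
    using Tp_cauchy[OF locfin summ r e] by blast
  show ?thesis
  proof (rule exI[of _ \<rho>], intro allI impI ballI)
    fix s :: real and v :: complex assume s: "\<rho> \<le> s" and v: "v \<in> cball 0 r"
    have lim: "(\<lambda>n. norm (Tp P a (real n) v - Tp P a s v)) \<longlonglongrightarrow> norm (Tlim P a v - Tp P a s v)"
      by (intro tendsto_intros Tp_LIMSEQ[OF locfin summ])
    have "norm (Tlim P a v - Tp P a s v) \<le> e"
    proof (rule LIMSEQ_le_const2[OF lim], rule exI[of _ "nat \<lceil>s\<rceil>"], intro allI impI)
      fix n :: nat assume "nat \<lceil>s\<rceil> \<le> n"
      hence "s \<le> real n" by linarith
      thus "norm (Tp P a (real n) v - Tp P a s v) \<le> e" using \<rho> s v by auto
    qed
    thus "norm (Tp P a s v - Tlim P a v) \<le> e" by (simp add: norm_minus_commute)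
  qed
qed

lemma Tlim_tendsto:
  fixes P :: "complex set"
  assumes locfin: "\<And>s. finite {p\<in>P. norm p < s}"
    and summ: "(\<lambda>p. 1/(norm p)^2) summable_on P"
  shows "((\<lambda>s. Tp P a s v) \<longlongrightarrow> Tlim P a v) at_top"
proof (rule tendstoI)
  fix e :: real assume e: "e > 0"
  obtain s0 where s0: "\<forall>s\<ge>s0. \<forall>u\<in>cball 0 (norm v). norm (Tp P a s u - Tlim P a u) \<le> e/2"
    using Tlim_unif[OF locfin summ _, of "norm v" "e/2" a] e by auto
  show "eventually (\<lambda>s. dist (Tp P a s v) (Tlim P a v) < e) at_top"
    unfolding eventually_at_top_linorder
  proof (rule exI[of _ s0], intro allI impI)
    fix s assume "s \<ge> s0"
    hence "norm (Tp P a s v - Tlim P a v) \<le> e/2" using s0 by auto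
    thus "dist (Tp P a s v) (Tlim P a v) < e" using e by (simp add: dist_norm)
  qed
qed

lemma Tlim_cont:
  fixes P :: "complex set"
  assumes locfin: "\<And>s. finite {p\<in>P. norm p < s}"
    and summ: "(\<lambda>p. 1/(norm p)^2) summable_on P" and r: "r \<ge> 0"
  shows "continuous_on (cball 0 r) (Tlim P a)"
proof (rule uniform_limit_theorem)
  show "\<forall>\<^sub>F s in at_top. continuous_on (cball 0 r) (Tp P a s)"
  proof (intro always_eventually allI)
    fix s
    have "continuous_on (cball 0 r) (\<lambda>v. 1 - (v * inverse p)^2)" for p :: complex
      by (intro continuous_intros)
    hence "continuous_on (cball 0 r) (\<lambda>v. 1 - (v / p)^2)" for p :: complex
      by (simp add: divide_inverse)
    thus "continuous_on (cball 0 r) (Tp P a s)"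
      unfolding Tp_def by (intro continuous_on_prod)
  qed
  show "uniform_limit (cball 0 r) (Tp P a) (Tlim P a) at_top"
  proof (rule uniform_limitI)
    fix e :: real assume e: "e > 0"
    obtain s0 where s0: "\<forall>s\<ge>s0. \<forall>u\<in>cball 0 r. norm (Tp P a s u - Tlim P a u) \<le> e/2"
      using Tlim_unif[OF locfin summ r, of "e/2" a] e by auto
    show "\<forall>\<^sub>F s in at_top. \<forall>u\<in>cball 0 r. dist (Tp P a s u) (Tlim P a u) < e"
      unfolding eventually_at_top_linorder
      by (rule exI[of _ s0]) (use s0 e in \<open>fastforce simp: dist_norm\<close>)
  qed
qed simp

lemma Tlim_near1:
  fixes P :: "complex set"
  assumes locfin: "\<And>s. finite {p\<in>P. norm p < s}"
    and summ: "(\<lambda>p. 1/(norm p)^2) summable_on P" and v: "norm v \<le> r"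
    and d: "\<And>E. finite E \<Longrightarrow> E \<subseteq> {p\<in>P. norm p \<ge> a} \<Longrightarrow> (\<Sum>p\<in>E. 1/(norm p)^2) \<le> \<delta>"
  shows "norm (Tlim P a v - 1) \<le> exp (r^2 * \<delta>) - 1"
proof -
  have lim: "(\<lambda>n. norm (Tp P a (real n) v - 1)) \<longlonglongrightarrow> norm (Tlim P a v - 1)"
    by (intro tendsto_intros Tp_LIMSEQ[OF locfin summ])
  show ?thesis
    by (rule LIMSEQ_le_const2[OF lim]) (use Tp_near1[OF locfin v d] in auto)
qed

lemma cont_eq_finite:
  fixes f g :: "complex \<Rightarrow> complex"
  assumes S: "open S" and cf: "continuous_on S f" and cg: "continuous_on S g" and F: "finite F"
    and eq: "\<And>y. y \<in> S \<Longrightarrow> y \<notin> F \<Longrightarrow> f y = g y" and x: "x \<in> S"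
  shows "f x = g x"
proof -
  have o: "open (S - (F - {x}))" using S F by (intro open_Diff finite_imp_closed) auto
  have "eventually (\<lambda>y. y \<in> (S - (F - {x})) - {x}) (at x)"
    by (rule eventually_at_in_open[OF o]) (use x in auto)
  hence ev: "eventually (\<lambda>y. f y = g y) (at x)"
    by (rule eventually_mono) (use eq in auto)
  have "f \<midarrow>x\<rightarrow> f x" using cf S x by (simp add: continuous_on_eq_continuous_at isContD)
  hence "g \<midarrow>x\<rightarrow> f x" by (rule tendsto_cong[THEN iffD1, rotated]) (rule ev)
  moreover have "g \<midarrow>x\<rightarrow> g x" using cg S x by (simp add: continuous_on_eq_continuous_at isContD)
  ultimately show ?thesis by (rule LIM_unique)
qed

lemma factor_cont: "continuous_on S (\<lambda>v. 1 - v / (p::complex))"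
proof -
  have "continuous_on S (\<lambda>v. 1 - v * inverse p)" by (intro continuous_intros)
  thus ?thesis by (simp add: divide_inverse)
qed

lemma tp_cont: "continuous_on S (trunc_prod A s)"
  unfolding trunc_prod_def by (intro continuous_on_prod factor_cont)

lemma tp_split:
  assumes "a \<le> s" "finite {p\<in>A. norm p < s}"
  shows "trunc_prod A s v = trunc_prod A a v * (\<Prod>p\<in>{p\<in>A. a \<le> norm p \<and> norm p < s}. 1 - v/p)"
proof -
  have eq: "{p\<in>A. norm p < s} = {p\<in>A. norm p < a} \<union> {p\<in>A. a \<le> norm p \<and> norm p < s}"
    using assms(1) by auto
  have "finite {p\<in>A. norm p < a}" "finite {p\<in>A. a \<le> norm p \<and> norm p < s}"
    using assms by (auto intro: finite_subset[OF _ assms(2)])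
  thus ?thesis unfolding trunc_prod_def eq by (subst prod.union_disjoint) auto
qed

lemma sq_split:
  assumes "a \<le> s" "finite {p\<in>A. norm p < s}"
  shows "(\<Prod>p\<in>{p\<in>A. norm p < s}. 1 - (v/p)^2) = (\<Prod>p\<in>{p\<in>A. norm p < a}. 1 - (v/p)^2) * Tp A a s v"
proof -
  have eq: "{p\<in>A. norm p < s} = {p\<in>A. norm p < a} \<union> {p\<in>A. a \<le> norm p \<and> norm p < s}"
    using assms(1) by auto
  have "finite {p\<in>A. norm p < a}" "finite {p\<in>A. a \<le> norm p \<and> norm p < s}"
    using assms by (auto intro: finite_subset[OF _ assms(2)])
  thus ?thesis unfolding Tp_def eq by (subst prod.union_disjoint) auto
qed

lemma mid_sq:
  "(\<Prod>p\<in>A. 1 - v/p) * (\<Prod>p\<in>A. 1 - (-v)/p) = (\<Prod>p\<in>A. 1 - (v/(p::complex))^2)"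
proof -
  have "(1 - v/p) * (1 - (-v)/p) = 1 - (v/p)^2" for p :: complex
    by (simp add: power2_eq_square algebra_simps)
  thus ?thesis by (simp add: prod.distrib[symmetric])
qed

locale thm3 = thmG G for G :: "complex \<Rightarrow> complex" +
  fixes R :: "nat \<Rightarrow> real" and C :: real and \<beta> :: real and \<mu> :: complex
  assumes R_lim: "filterlim R at_top sequentially"
    and R_circ: "\<And>N z. norm z = R N \<Longrightarrow> G z \<noteq> 0"
    and R_pos: "\<And>N. R N > 0"
    and C_pos: "C > 0"
    and lb: "\<And>N z. norm z = R N \<Longrightarrow> norm (deriv G z / G z) \<le> C / R N"
    and summ: "(\<lambda>p. 1/(norm p)^2) summable_on poles_of G"
    and \<beta>_pos: "\<beta> > 0"
    and thermal: "\<forall>w. \<not> is_pole (rho_of G) w \<longrightarrow>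
         rho_of G w = \<mu> * sinh (of_real \<beta> * w / 2) / sq_infprod (poles_of G) w"
begin

lemma locfinP: "finite {p\<in>poles_of G. norm p < s}"
  using fin_in(1)[of s] by (simp add: Pin_def)

lemma locfinZ: "finite {p\<in>zeros_of G. norm p < s}"
  using fin_in(3)[of s] by (simp add: Zin_def)

definition good :: "real \<Rightarrow> real \<Rightarrow> bool" where
  "good \<rho>0 r \<longleftrightarrow> r > 0 \<and> \<rho>0 \<ge> r + 1 \<and>
     (\<forall>E. finite E \<longrightarrow> E \<subseteq> {p\<in>poles_of G. norm p \<ge> \<rho>0} \<longrightarrow> (\<Sum>p\<in>E. 1/(norm p)^2) \<le> 1 / (4 * (r^2 + 1)))"

lemma exists_good:
  assumes "r > 0" shows "\<exists>\<rho>0. good \<rho>0 r"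
proof -
  have "r^2 + 1 > 0" using zero_le_power2[of r] by linarith
  hence pos: "1 / (4 * (r^2 + 1)) > 0" by simp
  obtain \<rho>1 where \<rho>1: "\<And>E. finite E \<Longrightarrow> E \<subseteq> {p\<in>poles_of G. norm p \<ge> \<rho>1} \<Longrightarrow> (\<Sum>p\<in>E. 1/(norm p)^2) \<le> 1 / (4 * (r^2 + 1))"
    using summ_tail[OF summ pos] by blast
  show ?thesis
  proof (rule exI[of _ "max \<rho>1 (r + 1)"])
    show "good (max \<rho>1 (r + 1)) r" unfolding good_def
      using assms \<rho>1 by (auto intro!: \<rho>1)
  qed
qed

lemma T_nz:
  assumes g: "good \<rho>0 r" and v: "norm v \<le> r"
  shows "Tlim (poles_of G) \<rho>0 v \<noteq> 0"
proof
  assume T0: "Tlim (poles_of G) \<rho>0 v = 0"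
  have d: "\<And>E. finite E \<Longrightarrow> E \<subseteq> {p\<in>poles_of G. norm p \<ge> \<rho>0} \<Longrightarrow> (\<Sum>p\<in>E. 1/(norm p)^2) \<le> 1 / (4 * (r^2 + 1))"
    using g by (auto simp: good_def)
  have "norm (Tlim (poles_of G) \<rho>0 v - 1) \<le> exp (r^2 * (1 / (4 * (r^2 + 1)))) - 1"
    by (rule Tlim_near1[OF locfinP summ v d])
  moreover have "r^2 * (1 / (4 * (r^2 + 1))) \<le> 1/4"
  proof -
    have "r^2 + 1 > 0" using zero_le_power2[of r] by linarith
    thus ?thesis by (simp add: field_simps)
  qed
  moreover have "r^2 * (1 / (4 * (r^2 + 1))) \<ge> 0" by simp
  moreover have "exp (y::real) \<le> 1 + 2 * y" if "0 \<le> y" "y \<le> 1/4" for y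
    using exp_bound_lemma[of y] that by simp
  ultimately have "norm (Tlim (poles_of G) \<rho>0 v - 1) \<le> exp (r^2 * (1 / (4 * (r^2 + 1)))) - 1"
    "exp (r^2 * (1 / (4 * (r^2 + 1)))) \<le> 1 + 2 * (r^2 * (1 / (4 * (r^2 + 1))))"
    "r^2 * (1 / (4 * (r^2 + 1))) \<le> 1/4"
    by blast+
  hence "norm (Tlim (poles_of G) \<rho>0 v - 1) \<le> 1/2" by linarith
  thus False using T0 by simp
qed

definition Kf :: "real \<Rightarrow> complex \<Rightarrow> complex" where
  "Kf \<rho>0 u = RF \<rho>0 u * trunc_prod (zeros_of G) \<rho>0 u"

definition Sf :: "real \<Rightarrow> complex \<Rightarrow> complex" where
  "Sf \<rho>0 v = trunc_prod (poles_of G) \<rho>0 v * Kf \<rho>0 (-v) * Tlim (poles_of G) \<rho>0 v / G 0"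

lemma Kf_eq: "G u \<noteq> 0 \<Longrightarrow> Kf \<rho>0 u = G u * trunc_prod (poles_of G) \<rho>0 u"
  unfolding Kf_def by (rule RF_eq)

lemma RF_cont: "continuous_on (ball 0 \<rho>) (RF \<rho>)"
  using RF_props(1) by (rule holomorphic_on_imp_continuous_on)

lemma Kf_cont: "continuous_on (ball 0 \<rho>0) (Kf \<rho>0)"
  unfolding Kf_def by (intro continuous_intros RF_cont tp_cont)


lemma SN_identity:
  assumes g: "good \<rho>0 r" and N: "R N > \<rho>0" and v: "norm v < r"
  shows "trunc_prod (poles_of G) (R N) v * trunc_prod (zeros_of G) (R N) (-v)
       = trunc_prod (poles_of G) \<rho>0 v * Kf \<rho>0 (-v) * Tp (poles_of G) \<rho>0 (R N) v / RF (R N) (-v)"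
proof -
  define Mid where "Mid = (\<lambda>u. \<Prod>p\<in>{p\<in>poles_of G. \<rho>0 \<le> norm p \<and> norm p < R N}. 1 - u/p)"
  have gr: "r > 0" "\<rho>0 \<ge> r + 1" using g by (auto simp: good_def)
  have bsub: "ball 0 \<rho>0 \<subseteq> ball (0::complex) (R N)" by (rule subset_ball) (use N in simp)
  have a: "RF (R N) u * trunc_prod (zeros_of G) (R N) u = Kf \<rho>0 u * Mid u" if u: "u \<in> ball 0 \<rho>0" for u
  proof (rule cont_eq_finite[OF open_ball _ _ _ _ u, where F = "{z. G z = 0} \<inter> cball 0 \<rho>0"])
    show "continuous_on (ball 0 \<rho>0) (\<lambda>u. RF (R N) u * trunc_prod (zeros_of G) (R N) u)"
      by (intro continuous_intros tp_cont continuous_on_subset[OF RF_cont bsub])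
    show "continuous_on (ball 0 \<rho>0) (\<lambda>u. Kf \<rho>0 u * Mid u)"
      unfolding Mid_def by (intro continuous_intros Kf_cont continuous_on_prod factor_cont)
    show "finite ({z. G z = 0} \<inter> cball 0 \<rho>0)" by (rule Zall_finite_cball)
    fix y assume y: "y \<in> ball 0 \<rho>0" "y \<notin> {z. G z = 0} \<inter> cball 0 \<rho>0"
    hence Gy: "G y \<noteq> 0" by auto
    have "RF (R N) y * trunc_prod (zeros_of G) (R N) y = G y * trunc_prod (poles_of G) (R N) y"
      by (rule RF_eq[OF Gy])
    also have "trunc_prod (poles_of G) (R N) y = trunc_prod (poles_of G) \<rho>0 y * Mid y"
      unfolding Mid_def by (rule tp_split) (use N locfinP in auto)
    also have "G y * (trunc_prod (poles_of G) \<rho>0 y * Mid y) = Kf \<rho>0 y * Mid y"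
      using Kf_eq[OF Gy] by simp
    finally show "RF (R N) y * trunc_prod (zeros_of G) (R N) y = Kf \<rho>0 y * Mid y" .
  qed
  have mv: "-v \<in> ball 0 \<rho>0" using v gr by auto
  have RFnz: "RF (R N) (-v) \<noteq> 0" by (rule RF_props(2)) (use v gr N in auto)
  have zs: "trunc_prod (zeros_of G) (R N) (-v) = Kf \<rho>0 (-v) * Mid (-v) / RF (R N) (-v)"
    using a[OF mv] RFnz by (simp add: field_simps)
  have ps: "trunc_prod (poles_of G) (R N) v = trunc_prod (poles_of G) \<rho>0 v * Mid v"
    unfolding Mid_def by (rule tp_split) (use N locfinP in auto)
  have mm: "Mid v * Mid (-v) = Tp (poles_of G) \<rho>0 (R N) v" unfolding Mid_def Tp_def by (rule mid_sq)
  have "trunc_prod (poles_of G) (R N) v * trunc_prod (zeros_of G) (R N) (-v)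
     = trunc_prod (poles_of G) \<rho>0 v * Kf \<rho>0 (-v) * (Mid v * Mid (-v)) / RF (R N) (-v)"
    unfolding zs ps by (simp add: algebra_simps)
  thus ?thesis unfolding mm .
qed

lemma SN_tendsto:
  assumes g: "good \<rho>0 r" and v: "norm v < r"
  shows "(\<lambda>N. trunc_prod (poles_of G) (R N) v * trunc_prod (zeros_of G) (R N) (-v)) \<longlonglongrightarrow> Sf \<rho>0 v"
proof -
  have gr: "r > 0" "\<rho>0 \<ge> r + 1" using g by (auto simp: good_def)
  have evR: "eventually (\<lambda>N. R N > \<rho>0) sequentially"
    using R_lim unfolding filterlim_at_top_dense by blast
  have T: "(\<lambda>N. Tp (poles_of G) \<rho>0 (R N) v) \<longlonglongrightarrow> Tlim (poles_of G) \<rho>0 v"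
    by (rule filterlim_compose[OF Tlim_tendsto[OF locfinP summ] R_lim])
  have RFc: "(\<lambda>N. RF (R N) (-v)) \<longlonglongrightarrow> G 0"
  proof -
    define b where "b = (\<lambda>x::real. norm (G 0) * (C / (x - r) * r * exp (C / (x - r) * r)))"
    have "filterlim (\<lambda>x::real. -r + x) at_top at_top"
      by (rule filterlim_tendsto_add_at_top[OF tendsto_const filterlim_ident])
    hence "filterlim (\<lambda>x::real. x - r) at_infinity at_top"
      by (intro filterlim_at_top_imp_at_infinity) simp
    hence c0: "((\<lambda>x::real. C / (x - r)) \<longlongrightarrow> 0) at_top"
      by (rule tendsto_divide_0[OF tendsto_const])
    have "(b \<longlongrightarrow> norm (G 0) * (0 * r * exp (0 * r))) at_top"
      unfolding b_def by (intro tendsto_intros c0)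
    hence b0: "(b \<longlongrightarrow> 0) at_top" by simp
    have lb0: "(\<lambda>N. b (R N)) \<longlonglongrightarrow> 0" by (rule filterlim_compose[OF b0 R_lim])
    have evb: "eventually (\<lambda>N. norm (RF (R N) (-v) - G 0) \<le> b (R N)) sequentially"
      using evR
    proof (rule eventually_mono)
      fix N assume N: "R N > \<rho>0"
      show "norm (RF (R N) (-v) - G 0) \<le> b (R N)" unfolding b_def
        by (rule RF_bound[OF R_pos[of N] R_circ[where N=N] lb[where N=N]]) (use C_pos gr N v in auto)
    qed
    have "(\<lambda>N. RF (R N) (-v) - G 0) \<longlonglongrightarrow> 0" by (rule Lim_null_comparison[OF evb lb0])
    thus ?thesis by (rule LIM_zero_cancel)
  qed
  have lim: "(\<lambda>N. trunc_prod (poles_of G) \<rho>0 v * Kf \<rho>0 (-v) * Tp (poles_of G) \<rho>0 (R N) v / RF (R N) (-v))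
     \<longlonglongrightarrow> Sf \<rho>0 v"
    unfolding Sf_def by (intro tendsto_intros T RFc G0(2))
  show ?thesis
  proof (rule Lim_transform_eventually[OF lim])
    show "\<forall>\<^sub>F N in sequentially. trunc_prod (poles_of G) \<rho>0 v * Kf \<rho>0 (-v) * Tp (poles_of G) \<rho>0 (R N) v / RF (R N) (-v)
         = trunc_prod (poles_of G) (R N) v * trunc_prod (zeros_of G) (R N) (-v)"
      using evR by (rule eventually_mono) (use SN_identity[OF g _ v] in auto)
  qed
qed

lemma Sf_cont:
  assumes g: "good \<rho>0 r"
  shows "continuous_on (ball 0 r) (Sf \<rho>0)"
proof -
  have gr: "r > 0" "\<rho>0 \<ge> r + 1" using g by (auto simp: good_def)
  have k: "continuous_on (ball 0 r) (\<lambda>v. Kf \<rho>0 (-v))"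
    by (rule continuous_on_compose2[OF Kf_cont continuous_on_minus[OF continuous_on_id]]) (use gr in auto)
  have t: "continuous_on (ball 0 r) (Tlim (poles_of G) \<rho>0)"
    by (rule continuous_on_subset[OF Tlim_cont[OF locfinP summ, of r] ball_subset_cball]) (use gr in auto)
  show ?thesis unfolding Sf_def
    by (intro continuous_intros tp_cont k t) (use G0 in auto)
qed

lemma sq_infprod_eq:
  "sq_infprod (poles_of G) v = (\<Prod>p\<in>{p\<in>poles_of G. norm p < \<rho>0}. 1 - (v/p)^2) * Tlim (poles_of G) \<rho>0 v"
  unfolding sq_infprod_def
proof (rule tendsto_Lim)
  have "((\<lambda>s. (\<Prod>p\<in>{p\<in>poles_of G. norm p < \<rho>0}. 1 - (v/p)^2) * Tp (poles_of G) \<rho>0 s v) \<longlongrightarrow>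
          (\<Prod>p\<in>{p\<in>poles_of G. norm p < \<rho>0}. 1 - (v/p)^2) * Tlim (poles_of G) \<rho>0 v) at_top"
    by (intro tendsto_intros Tlim_tendsto[OF locfinP summ])
  thus "((\<lambda>s. \<Prod>p\<in>{p\<in>poles_of G. norm p < s}. 1 - (v/p)^2) \<longlongrightarrow>
          (\<Prod>p\<in>{p\<in>poles_of G. norm p < \<rho>0}. 1 - (v/p)^2) * Tlim (poles_of G) \<rho>0 v) at_top"
  proof (rule Lim_transform_eventually)
    show "\<forall>\<^sub>F s in at_top. (\<Prod>p\<in>{p\<in>poles_of G. norm p < \<rho>0}. 1 - (v/p)^2) * Tp (poles_of G) \<rho>0 s v
        = (\<Prod>p\<in>{p\<in>poles_of G. norm p < s}. 1 - (v/p)^2)"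
      unfolding eventually_at_top_linorder
      by (rule exI[of _ \<rho>0]) (use sq_split[OF _ locfinP] in auto)
  qed
qed simp

lemma thermal_good:
  assumes g: "good \<rho>0 r" and v: "norm v < r" and Gv: "G v \<noteq> 0" and Gmv: "G (-v) \<noteq> 0"
  shows "sq_infprod (poles_of G) v \<noteq> 0"
    "rho_of G v * sq_infprod (poles_of G) v = \<mu> * sinh (of_real \<beta> * v / 2)"
proof -
  define Pi where "Pi = (\<Prod>p\<in>{p\<in>poles_of G. norm p < \<rho>0}. 1 - (v/p)^2)"
  have sq: "sq_infprod (poles_of G) v = Pi * Tlim (poles_of G) \<rho>0 v"
    unfolding Pi_def by (rule sq_infprod_eq)
  have Pinz: "Pi \<noteq> 0" unfolding Pi_def
  proof (rule prod_nz[OF locfinP])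
    fix p assume p: "p \<in> {p\<in>poles_of G. norm p < \<rho>0}"
    hence Gp: "G p = 0" using poles_sub by auto
    have vp: "v \<noteq> p" "v \<noteq> -p" using Gv Gmv Gp by auto
    have p0: "p \<noteq> 0" using Gp zero_notin by auto
    show "1 - (v/p)^2 \<noteq> 0"
    proof
      assume "1 - (v/p)^2 = 0"
      hence "(v/p)^2 = 1" by simp
      hence "v/p = 1 \<or> v/p = -1" by (simp add: power2_eq_1_iff)
      thus False using vp p0 by (auto simp: field_simps)
    qed
  qed
  have Tnz: "Tlim (poles_of G) \<rho>0 v \<noteq> 0" by (rule T_nz[OF g]) (use v in simp)
  show nz: "sq_infprod (poles_of G) v \<noteq> 0" using sq Pinz Tnz by simp
  have np: "\<not> is_pole (rho_of G) v"
  proof -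
    have a1: "G analytic_on {v}"
      by (rule analytic_nonpole) (use Gv poles_sub in \<open>auto simp: poles_of_def\<close>)
    have a2: "G analytic_on {-v}"
      by (rule analytic_nonpole) (use Gmv poles_sub in \<open>auto simp: poles_of_def\<close>)
    have "(G \<circ> uminus) analytic_on {v}"
      by (rule analytic_on_compose) (use a2 in \<open>auto intro: analytic_intros\<close>)
    hence a3: "(\<lambda>w. G (-w)) analytic_on {v}" by (simp add: o_def)
    have "(\<lambda>w. (G w - G (-w)) / (2 * \<i>)) analytic_on {v}"
      by (intro analytic_intros a1 a3) auto
    hence "rho_of G analytic_on {v}" by (simp add: rho_of_def[abs_def])
    thus ?thesis by (rule analytic_at_imp_no_pole)
  qed
  have "rho_of G v = \<mu> * sinh (of_real \<beta> * v / 2) / sq_infprod (poles_of G) v"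
    using thermal np by blast
  thus "rho_of G v * sq_infprod (poles_of G) v = \<mu> * sinh (of_real \<beta> * v / 2)"
    using nz by simp
qed

lemma Sf_good:
  assumes g: "good \<rho>0 r" and v: "norm v < r" and Gv: "G v \<noteq> 0" and Gmv: "G (-v) \<noteq> 0"
  shows "Sf \<rho>0 v - Sf \<rho>0 (-v) = 2 * \<i> * (- \<mu> / G 0) * sinh (of_real \<beta> * v / 2)"
proof -
  define A where "A = trunc_prod (poles_of G) \<rho>0"
  define T where "T = Tlim (poles_of G) \<rho>0 v"
  define Pi where "Pi = (\<Prod>p\<in>{p\<in>poles_of G. norm p < \<rho>0}. 1 - (v/p)^2)"
  have Pi: "Pi = A v * A (-v)" unfolding Pi_def A_def trunc_prod_def by (rule mid_sq[symmetric])
  have Tm: "Tlim (poles_of G) \<rho>0 (-v) = T" by (simp add: T_def Tlim_even)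
  have S1: "Sf \<rho>0 v = A v * (G (-v) * A (-v)) * T / G 0"
    unfolding Sf_def A_def T_def using Kf_eq[OF Gmv] by simp
  have S2: "Sf \<rho>0 (-v) = A (-v) * (G v * A v) * T / G 0"
    unfolding Sf_def using Kf_eq[OF Gv] Tm by (simp add: A_def)
  have diff: "Sf \<rho>0 v - Sf \<rho>0 (-v) = Pi * T * (G (-v) - G v) / G 0"
    unfolding S1 S2 Pi by (simp add: algebra_simps diff_divide_distrib)
  have sq: "sq_infprod (poles_of G) v = Pi * T"
    unfolding Pi_def T_def by (rule sq_infprod_eq)
  have th: "rho_of G v * (Pi * T) = \<mu> * sinh (of_real \<beta> * v / 2)"
    using thermal_good(2)[OF g v Gv Gmv] sq by simp
  have "G (-v) - G v = - (2 * \<i>) * rho_of G v" by (simp add: rho_of_def)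
  hence "Pi * T * (G (-v) - G v) = Pi * T * (- (2 * \<i>) * rho_of G v)" by (rule arg_cong)
  also have "\<dots> = - (2 * \<i>) * (rho_of G v * (Pi * T))" by (simp only: mult_ac)
  also have "\<dots> = - (2 * \<i>) * (\<mu> * sinh (of_real \<beta> * v / 2))" by (simp only: th)
  finally have key: "Pi * T * (G (-v) - G v) = - (2 * \<i>) * (\<mu> * sinh (of_real \<beta> * v / 2))" .
  show ?thesis unfolding diff key using G0(2) by (simp add: field_simps)
qed

end

lemma prod_sq_tendsto: "((\<lambda>v. \<Prod>p\<in>A. 1 - (v/(p::complex))^2) \<longlongrightarrow> 1) (at 0)"
proof -
  have c: "continuous_on UNIV (\<lambda>v. 1 - (v * inverse p)^2)" for p :: complex
    by (intro continuous_intros)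
  have "continuous_on UNIV (\<lambda>v. \<Prod>p\<in>A. 1 - (v/(p::complex))^2)"
    by (intro continuous_on_prod) (use c in \<open>simp add: divide_inverse\<close>)
  hence "isCont (\<lambda>v. \<Prod>p\<in>A. 1 - (v/(p::complex))^2) 0"
    by (simp add: continuous_on_eq_continuous_at)
  thus ?thesis by (simp add: isCont_def)
qed

context thm3
begin

lemma conj12:
  shows "convergent (\<lambda>N. trunc_prod (poles_of G) (R N) w * trunc_prod (zeros_of G) (R N) (- w))"
    "lim (\<lambda>N. trunc_prod (poles_of G) (R N) w * trunc_prod (zeros_of G) (R N) (- w))
       - lim (\<lambda>N. trunc_prod (poles_of G) (R N) (- w) * trunc_prod (zeros_of G) (R N) w)
       = 2 * \<i> * (- \<mu> / G 0) * sinh (of_real \<beta> * w / 2)"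
proof -
  define r where "r = norm w + 1"
  have r: "r > 0" "norm w < r" unfolding r_def using norm_ge_zero[of w] by linarith+
  obtain \<rho>0 where g: "good \<rho>0 r" using exists_good[OF r(1)] by blast
  have t1: "(\<lambda>N. trunc_prod (poles_of G) (R N) w * trunc_prod (zeros_of G) (R N) (- w)) \<longlonglongrightarrow> Sf \<rho>0 w"
    by (rule SN_tendsto[OF g r(2)])
  have "(\<lambda>N. trunc_prod (poles_of G) (R N) (-w) * trunc_prod (zeros_of G) (R N) (- (-w))) \<longlonglongrightarrow> Sf \<rho>0 (-w)"
    by (rule SN_tendsto[OF g]) (use r in simp)
  hence t2: "(\<lambda>N. trunc_prod (poles_of G) (R N) (-w) * trunc_prod (zeros_of G) (R N) w) \<longlonglongrightarrow> Sf \<rho>0 (-w)"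
    by simp
  show "convergent (\<lambda>N. trunc_prod (poles_of G) (R N) w * trunc_prod (zeros_of G) (R N) (- w))"
    using t1 by (auto simp: convergent_def)
  define F where "F = ({z. G z = 0} \<inter> cball 0 r) \<union> uminus ` ({z. G z = 0} \<inter> cball 0 r)"
  have fF: "finite F" unfolding F_def using Zall_finite_cball by auto
  have "Sf \<rho>0 w - Sf \<rho>0 (-w) = 2 * \<i> * (- \<mu> / G 0) * sinh (of_real \<beta> * w / 2)"
  proof (rule cont_eq_finite[where S="ball 0 r" and f="\<lambda>v. Sf \<rho>0 v - Sf \<rho>0 (-v)" and F=F, OF open_ball _ _ fF])
    have "continuous_on (ball 0 r) (\<lambda>v. Sf \<rho>0 (-v))"
      by (rule continuous_on_compose2[OF Sf_cont[OF g] continuous_on_minus[OF continuous_on_id]]) auto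
    thus "continuous_on (ball 0 r) (\<lambda>v. Sf \<rho>0 v - Sf \<rho>0 (-v))"
      by (intro continuous_intros Sf_cont[OF g])
    show "continuous_on (ball 0 r) (\<lambda>v. 2 * \<i> * (- \<mu> / G 0) * sinh (of_real \<beta> * v / 2))"
      by (intro continuous_intros) auto
    show "w \<in> ball 0 r" using r by simp
    fix y assume y: "y \<in> ball 0 r" "y \<notin> F"
    have Gy: "G y \<noteq> 0" using y by (auto simp: F_def)
    have Gmy: "G (-y) \<noteq> 0"
    proof
      assume "G (-y) = 0"
      hence "-y \<in> {z. G z = 0} \<inter> cball 0 r" using y by auto
      hence "y \<in> F" unfolding F_def by (metis UnI2 image_eqI minus_minus)
      thus False using y by simp
    qed
    show "Sf \<rho>0 y - Sf \<rho>0 (-y) = 2 * \<i> * (- \<mu> / G 0) * sinh (of_real \<beta> * y / 2)"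
      by (rule Sf_good[OF g _ Gy Gmy]) (use y in simp)
  qed
  thus "lim (\<lambda>N. trunc_prod (poles_of G) (R N) w * trunc_prod (zeros_of G) (R N) (- w))
       - lim (\<lambda>N. trunc_prod (poles_of G) (R N) (- w) * trunc_prod (zeros_of G) (R N) w)
       = 2 * \<i> * (- \<mu> / G 0) * sinh (of_real \<beta> * w / 2)"
    using limI[OF t1] limI[OF t2] by simp
qed

lemma conj3: "- \<mu> / G 0 = 2 * \<i> * deriv G 0 / (of_real \<beta> * G 0)"
proof -
  obtain \<rho>0 where g: "good \<rho>0 1" using exists_good[of 1] by auto
  define F where "F = ({z. G z = 0} \<inter> cball 0 1) \<union> uminus ` ({z. G z = 0} \<inter> cball 0 1)"
  have fF: "finite F" unfolding F_def using Zall_finite_cball by auto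
  have F0: "0 \<notin> F" using G0 by (auto simp: F_def)
  have o: "open (ball 0 1 - F)" using fF by (intro open_Diff finite_imp_closed) auto
  have ev: "eventually (\<lambda>v. v \<in> (ball 0 1 - F) - {0}) (at (0::complex))"
    by (rule eventually_at_in_open[OF o]) (use F0 in auto)
  define q where "q = sq_infprod (poles_of G)"
  define Pi where "Pi = (\<lambda>v. \<Prod>p\<in>{p\<in>poles_of G. norm p < \<rho>0}. 1 - (v/p)^2)"
  define T where "T = Tlim (poles_of G) \<rho>0"
  have qeq: "q v = Pi v * T v" for v unfolding q_def Pi_def T_def by (rule sq_infprod_eq)
  have T0: "T 0 = 1" unfolding T_def Tlim_def by (simp add: Tp_def)
  have "continuous_on (ball 0 1) T"
    unfolding T_def by (rule continuous_on_subset[OF Tlim_cont[OF locfinP summ, of 1]]) auto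
  hence "isCont T 0" by (simp add: continuous_on_eq_continuous_at)
  hence Tl: "(T \<longlongrightarrow> 1) (at 0)" using T0 by (simp add: isCont_def)
  have ql: "(q \<longlongrightarrow> 1) (at 0)"
  proof -
    have "((\<lambda>v. Pi v * T v) \<longlongrightarrow> 1 * 1) (at 0)"
      unfolding Pi_def by (intro tendsto_intros prod_sq_tendsto Tl)
    thus ?thesis by (simp add: qeq[abs_def])
  qed
  have np0: "\<not> is_pole G 0" by (rule G0(1))
  obtain U where U: "open U" "0 \<in> U" "G holomorphic_on U"
    using analytic_nonpole[OF np0] analytic_at by blast
  have dG: "(G has_field_derivative deriv G 0) (at 0)" by (rule holomorphic_derivI[OF U(3,1,2)])
  have L1: "((\<lambda>v. (G v - G 0) / v) \<longlongrightarrow> deriv G 0) (at 0)"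
    using dG unfolding has_field_derivative_iff by simp
  have dm: "((\<lambda>v. - v) has_field_derivative -1) (at (0::complex))"
    by (auto intro!: derivative_eq_intros)
  have dG': "(G has_field_derivative deriv G 0) (at (- (0::complex)))" using dG by simp
  have "((\<lambda>v. G (- v)) has_field_derivative deriv G 0 * -1) (at 0)"
    by (rule DERIV_chain2[OF dG' dm])
  hence L2: "((\<lambda>v. (G (-v) - G 0) / v) \<longlongrightarrow> deriv G 0 * -1) (at 0)"
    unfolding has_field_derivative_iff by simp
  have dl: "((\<lambda>v. of_real \<beta> * v / 2) has_field_derivative of_real \<beta> / 2) (at (0::complex))"
    by (auto intro!: derivative_eq_intros)
  have "((\<lambda>v. sinh (of_real \<beta> * v / 2)) has_field_derivative cosh (of_real \<beta> * 0 / 2) * (of_real \<beta> / 2)) (at (0::complex))"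
    by (rule has_field_derivative_sinh[OF dl])
  hence L3: "((\<lambda>v. sinh (of_real \<beta> * v / 2) / v) \<longlongrightarrow> of_real \<beta> / 2) (at (0::complex))"
    unfolding has_field_derivative_iff by simp
  have lhs: "((\<lambda>v. ((G v - G 0) / v - (G (-v) - G 0) / v) / (2 * \<i>) * q v) \<longlongrightarrow>
       (deriv G 0 - deriv G 0 * -1) / (2 * \<i>) * 1) (at 0)"
    by (intro tendsto_intros L1 L2 ql) simp
  have rhs: "((\<lambda>v. \<mu> * (sinh (of_real \<beta> * v / 2) / v)) \<longlongrightarrow> \<mu> * (of_real \<beta> / 2)) (at 0)"
    by (intro tendsto_intros L3)
  have eqev: "eventually (\<lambda>v. \<mu> * (sinh (of_real \<beta> * v / 2) / v) =
       ((G v - G 0) / v - (G (-v) - G 0) / v) / (2 * \<i>) * q v) (at 0)"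
    using ev
  proof (rule eventually_mono)
    fix v assume v: "v \<in> (ball 0 1 - F) - {0}"
    have Gv: "G v \<noteq> 0" using v by (auto simp: F_def)
    have Gmv: "G (-v) \<noteq> 0"
    proof
      assume "G (-v) = 0"
      hence "-v \<in> {z. G z = 0} \<inter> cball 0 1" using v by auto
      hence "v \<in> F" unfolding F_def by (metis UnI2 image_eqI minus_minus)
      thus False using v by simp
    qed
    have nv: "norm v < 1" using v by simp
    have th: "rho_of G v * q v = \<mu> * sinh (of_real \<beta> * v / 2)"
      unfolding q_def by (rule thermal_good(2)[OF g nv Gv Gmv])
    have v0: "v \<noteq> 0" using v by simp
    have "((G v - G 0) / v - (G (-v) - G 0) / v) / (2 * \<i>) * q v = (rho_of G v * q v) / v"
      using v0 by (simp add: rho_of_def field_simps)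
    also have "\<dots> = \<mu> * (sinh (of_real \<beta> * v / 2) / v)" by (simp add: th)
    finally show "\<mu> * (sinh (of_real \<beta> * v / 2) / v) = ((G v - G 0) / v - (G (-v) - G 0) / v) / (2 * \<i>) * q v"
      by simp
  qed
  have "((\<lambda>v. ((G v - G 0) / v - (G (-v) - G 0) / v) / (2 * \<i>) * q v) \<longlongrightarrow> \<mu> * (of_real \<beta> / 2)) (at 0)"
    by (rule Lim_transform_eventually[OF rhs eqev])
  hence eq: "(deriv G 0 - deriv G 0 * -1) / (2 * \<i>) * 1 = \<mu> * (of_real \<beta> / 2)"
    using lhs by (intro tendsto_unique[of "at (0::complex)"]) auto
  hence e1: "- (\<i> * (deriv G 0 * 2)) = \<mu> * of_real \<beta>"
    by (simp add: field_simps)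
  have "2 * \<i> * deriv G 0 = - (- (\<i> * (deriv G 0 * 2)))" by simp
  also have "\<dots> = - (\<mu> * of_real \<beta>)" by (simp only: e1)
  finally have eq': "2 * \<i> * deriv G 0 = - (\<mu> * of_real \<beta>)" .
  have b0: "(of_real \<beta> :: complex) \<noteq> 0" using \<beta>_pos by simp
  show ?thesis using eq' b0 G0(2) by (simp add: field_simps)
qed

end

theorem mainTheorem3:
  fixes G :: "complex \<Rightarrow> complex"
    and R :: "nat \<Rightarrow> real" and C :: real
    and \<beta> :: real and \<mu> :: complex
  assumes mero: "G nicely_meromorphic_on UNIV"
    and holo_uhp: "G analytic_on {z. Im z \<ge> 0}"
    and poles_lower: "\<forall>z\<in>poles_of G. Im z < 0"
    and simple_poles: "\<forall>z\<in>poles_of G. zorder G z = -1"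
    and simple_zeros: "\<forall>z\<in>zeros_of G. zorder G z = 1"
    and G0: "\<not> is_pole G 0" "G 0 \<noteq> 0"
    and R_mono: "strict_mono R" and R_pos: "\<forall>N. R N > 0"
    and R_lim: "filterlim R at_top sequentially"
    and R_circ: "\<forall>N z. norm z = R N \<longrightarrow> z \<notin> poles_of G \<and> z \<notin> zeros_of G"
    and C_pos: "C > 0"
    and logderiv_bound: "\<forall>N z. norm z = R N \<longrightarrow> norm (deriv G z / G z) \<le> C / R N"
    and summ: "(\<lambda>p. 1 / (norm p)^2) summable_on poles_of G"
    and \<beta>_pos: "\<beta> > 0" and \<mu>_nz: "\<mu> \<noteq> 0"
    and thermal: "\<forall>w. \<not> is_pole (rho_of G) w \<longrightarrow>
         rho_of G w = \<mu> * sinh (of_real \<beta> * w / 2) / sq_infprod (poles_of G) w"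
  shows "(\<forall>w. convergent (\<lambda>N. trunc_prod (poles_of G) (R N) w * trunc_prod (zeros_of G) (R N) (- w)))
       \<and> (\<forall>w. lim (\<lambda>N. trunc_prod (poles_of G) (R N) w * trunc_prod (zeros_of G) (R N) (- w))
              - lim (\<lambda>N. trunc_prod (poles_of G) (R N) (- w) * trunc_prod (zeros_of G) (R N) w)
              = 2 * \<i> * (- \<mu> / G 0) * sinh (of_real \<beta> * w / 2))
       \<and> - \<mu> / G 0 = 2 * \<i> * deriv G 0 / (of_real \<beta> * G 0)"
proof -
  interpret g: thmG G
    by unfold_locales (use mero simple_poles simple_zeros G0 in auto)
  have circ: "\<And>N z. norm z = R N \<Longrightarrow> G z \<noteq> 0"
  proof -
    fix N and z :: complex assume "norm z = R N"
    hence "z \<notin> poles_of G \<union> zeros_of G" using R_circ by blast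
    thus "G z \<noteq> 0" using g.Zall_eq by blast
  qed
  interpret t: thm3 G R C \<beta> \<mu>
    by unfold_locales (use R_lim circ R_pos C_pos logderiv_bound summ \<beta>_pos thermal in auto)
  show ?thesis using t.conj12 t.conj3 by blast
qed

end
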